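(* Let $P_{XZ}$ be a joint distribution on a finite alphabet $\mathsf{X}\times\mathsf{Z}$, let $\mathsf{Y}$ be a finite reconstruction alphabet, and let $W_{X|YZ}$ be a conditional distribution of $X$ given $(Y,Z)$ (the posterior channel). Suppose there exist a finite alphabet $\mathsf{U}$ and conditional PMFs $P_{U|X}$ and $P_{Y|UZ}$ such that the joint distribution $$P_{UXYZ}(u,x,y,z):=P_{XZ}(x,z)P_{U|X}(u|x)P_{Y|UZ}(y|u,z)$$ satisfies: its induced conditional $P_{X|YZ}(x|y,z)=W_{X|YZ}(x|y,z)$ for all $(x,y,z)$ with $P_{YZ}(y,z)>0$; $Z-X-U$, $X-(U,Z)-Y$ and $X-(Y,Z)-U$ are Markov chains under $P_{UXYZ}$; and $R\ge I(X;U)-I(U;Z)$, where the mutual informations are computed under $P_{UXYZ}$. Then $R$ is an achievable rate (in the sense defined in the context) for $(P_{XZ},\mathsf{Y},W_{X|YZ})$.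
   Context: An $(n,\Theta)$ lossy source compression protocol with classical side information consists of a randomized encoder $\mathcal{E}^{(n)}(m|x^n)$, a conditional PMF on $[\Theta]=\{1,\dots,\Theta\}$ given $x^n\in\mathsf{X}^n$, and a randomized decoder $\mathcal{D}^{(n)}(y^n|m,z^n)$, a conditional PMF on $\mathsf{Y}^n$ given $(m,z^n)\in[\Theta]\times\mathsf{Z}^n$. It induces $$P_{X^nY^nZ^n}(x^n,y^n,z^n)=P_{XZ}^n(x^n,z^n)\sum_{m\in[\Theta]}\mathcal{E}^{(n)}(m|x^n)\mathcal{D}^{(n)}(y^n|m,z^n),$$ where $P_{XZ}^n$ is the $n$-fold i.i.d. product. With $P_{Y^nZ^n}$ its marginal and $W^n_{X|YZ}(x^n|y^n,z^n)=\prod_{i=1}^nW_{X|YZ}(x_i|y_i,z_i)$, the error is $\Xi:=\|P_{X^nY^nZ^n}-P_{Y^nZ^n}W^n_{X|YZ}\|_{\mathrm{TV}}$ (total variation distance). A rate $R$ is achievable if for every $\epsilon>0$ and all sufficiently large $n$ there exists an $(n,\Theta)$ protocol with $\frac1n\log\Theta\le R+\epsilon$ and $\Xi\le\epsilon$. *)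

theory Defs
  imports Complex_Main
begin

definition is_pmf :: "('a::finite \<Rightarrow> real) \<Rightarrow> bool" where
  "is_pmf p \<longleftrightarrow> (\<forall>a. p a \<ge> 0) \<and> (\<Sum>a\<in>UNIV. p a) = 1"

definition seqs :: "nat \<Rightarrow> 'a list set" where
  "seqs n = {xs. length xs = n}"

definition mutual_info :: "('a::finite \<Rightarrow> 'b::finite \<Rightarrow> real) \<Rightarrow> real" where
  "mutual_info p = (\<Sum>a\<in>UNIV. \<Sum>b\<in>UNIV.
      if p a b = 0 then 0
      else p a b * log 2 (p a b / ((\<Sum>b'\<in>UNIV. p a b') * (\<Sum>a'\<in>UNIV. p a' b))))"

text \<open>A - B - C is a Markov chain under the joint PMF p:
  P(a,b,c) P(b) = P(a,b) P(b,c).\<close>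
definition markov_chain :: "('a::finite \<Rightarrow> 'b::finite \<Rightarrow> 'c::finite \<Rightarrow> real) \<Rightarrow> bool" where
  "markov_chain p \<longleftrightarrow> (\<forall>a b c.
      p a b c * (\<Sum>a'\<in>UNIV. \<Sum>c'\<in>UNIV. p a' b c') =
      (\<Sum>c'\<in>UNIV. p a b c') * (\<Sum>a'\<in>UNIV. p a' b c))"

text \<open>An (n,Theta) protocol: randomized encoder E xs m (a PMF on {1..Theta} for each
length-n source sequence xs), randomized decoder D m zs ys (a PMF on length-n
reconstruction sequences for each message m and side information zs).\<close>
definition is_protocol :: "nat \<Rightarrow> nat \<Rightarrow> ('x list \<Rightarrow> nat \<Rightarrow> real)
    \<Rightarrow> (nat \<Rightarrow> 'z list \<Rightarrow> 'y list \<Rightarrow> real) \<Rightarrow> bool" where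
  "is_protocol n \<Theta> E D \<longleftrightarrow> \<Theta> \<ge> 1 \<and>
     (\<forall>xs\<in>seqs n. (\<forall>m\<in>{1..\<Theta>}. E xs m \<ge> 0) \<and> (\<Sum>m\<in>{1..\<Theta>}. E xs m) = 1) \<and>
     (\<forall>m\<in>{1..\<Theta>}. \<forall>zs\<in>seqs n. (\<forall>ys\<in>seqs n. D m zs ys \<ge> 0) \<and> (\<Sum>ys\<in>seqs n. D m zs ys) = 1)"

definition induced_joint :: "('x \<Rightarrow> 'z \<Rightarrow> real) \<Rightarrow> nat \<Rightarrow> nat \<Rightarrow> ('x list \<Rightarrow> nat \<Rightarrow> real)
    \<Rightarrow> (nat \<Rightarrow> 'z list \<Rightarrow> 'y list \<Rightarrow> real) \<Rightarrow> 'x list \<Rightarrow> 'y list \<Rightarrow> 'z list \<Rightarrow> real" where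
  "induced_joint PXZ n \<Theta> E D xs ys zs =
     (\<Prod>i<n. PXZ (xs ! i) (zs ! i)) * (\<Sum>m\<in>{1..\<Theta>}. E xs m * D m zs ys)"

text \<open>The error Xi: total variation distance (half the L1 distance) between the
induced joint distribution and P_{Y^n Z^n} W^n_{X|YZ}.\<close>
definition protocol_error :: "('x::finite \<Rightarrow> 'z::finite \<Rightarrow> real) \<Rightarrow> ('y::finite \<Rightarrow> 'z \<Rightarrow> 'x \<Rightarrow> real)
    \<Rightarrow> nat \<Rightarrow> nat \<Rightarrow> ('x list \<Rightarrow> nat \<Rightarrow> real) \<Rightarrow> (nat \<Rightarrow> 'z list \<Rightarrow> 'y list \<Rightarrow> real) \<Rightarrow> real" where
  "protocol_error PXZ W n \<Theta> E D =
     (let P = induced_joint PXZ n \<Theta> E D;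
          PYZ = (\<lambda>ys zs. \<Sum>xs\<in>seqs n. P xs ys zs)
      in (1/2) * (\<Sum>xs\<in>seqs n. \<Sum>ys\<in>seqs n. \<Sum>zs\<in>seqs n.
            \<bar>P xs ys zs - PYZ ys zs * (\<Prod>i<n. W (ys ! i) (zs ! i) (xs ! i))\<bar>))"

text \<open>Achievability of rate R for (P_XZ, Y, W_{X|YZ}); Y is the type 'y.\<close>
definition achievable :: "('x::finite \<Rightarrow> 'z::finite \<Rightarrow> real) \<Rightarrow> ('y::finite \<Rightarrow> 'z \<Rightarrow> 'x \<Rightarrow> real)
    \<Rightarrow> real \<Rightarrow> bool" where
  "achievable PXZ W R \<longleftrightarrow> (\<forall>\<epsilon>>0. \<exists>N. \<forall>n\<ge>N. \<exists>\<Theta> E D.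
      is_protocol n \<Theta> E D \<and> log 2 (real \<Theta>) / real n \<le> R + \<epsilon> \<and>
      protocol_error PXZ W n \<Theta> E D \<le> \<epsilon>)"

end

theory Submission
  imports Defs
begin

definition lset :: "'a set \<Rightarrow> nat \<Rightarrow> 'a list set" where
  "lset A n = {xs. length xs = n \<and> set xs \<subseteq> A}"

lemma lset_Suc: "lset A (Suc n) = (\<lambda>(ys,a). ys @ [a]) ` (lset A n \<times> A)"
proof (rule set_eqI)
  fix xs :: "'a list"
  show "xs \<in> lset A (Suc n) \<longleftrightarrow> xs \<in> (\<lambda>(ys,a). ys @ [a]) ` (lset A n \<times> A)"
  proof
    assume h: "xs \<in> lset A (Suc n)"
    then have "xs \<noteq> []" by (auto simp: lset_def)
    then obtain ys a where "xs = ys @ [a]" by (metis rev_exhaust)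
    with h show "xs \<in> (\<lambda>(ys,a). ys @ [a]) ` (lset A n \<times> A)"
      by (auto simp: lset_def image_iff)
  qed (auto simp: lset_def)
qed

lemma finite_lset: "finite A \<Longrightarrow> finite (lset A n)"
  unfolding lset_def using finite_lists_length_eq[of A n] by (simp add: conj_commute)

lemma sum_lset_prod:
  assumes "finite A"
  shows "(\<Sum>xs\<in>lset A n. \<Prod>i<n. f i (xs!i)) = (\<Prod>i<n. \<Sum>a\<in>A. (f i a :: 'b::comm_semiring_1))"
proof (induction n)
  case 0
  have "lset A 0 = {[]}" by (auto simp: lset_def)
  then show ?case by simp
next
  case (Suc n)
  have inj: "inj_on (\<lambda>(ys,a). ys @ [a]) (lset A n \<times> A)"
    by (auto simp: inj_on_def)
  have "(\<Sum>xs\<in>lset A (Suc n). \<Prod>i<Suc n. f i (xs!i))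
      = (\<Sum>p\<in>lset A n \<times> A. \<Prod>i<Suc n. f i ((fst p @ [snd p])!i))"
    unfolding lset_Suc by (subst sum.reindex[OF inj]) (simp add: case_prod_beta)
  also have "\<dots> = (\<Sum>p\<in>lset A n \<times> A. (\<Prod>i<n. f i (fst p ! i)) * f n (snd p))"
  proof (rule sum.cong[OF refl])
    fix p assume "p \<in> lset A n \<times> A"
    then have l: "length (fst p) = n" by (auto simp: lset_def)
    have "(\<Prod>i<n. f i ((fst p @ [snd p])!i)) = (\<Prod>i<n. f i (fst p ! i))"
      by (rule prod.cong) (auto simp: l nth_append)
    then show "(\<Prod>i<Suc n. f i ((fst p @ [snd p])!i)) = (\<Prod>i<n. f i (fst p ! i)) * f n (snd p)"
      by (simp add: l nth_append)
  qed
  also have "\<dots> = (\<Sum>ys\<in>lset A n. \<Sum>a\<in>A. (\<Prod>i<n. f i (ys ! i)) * f n a)"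
    by (simp add: sum.cartesian_product')
  also have "\<dots> = (\<Sum>ys\<in>lset A n. (\<Prod>i<n. f i (ys ! i))) * (\<Sum>a\<in>A. f n a)"
    by (rule sum_product[symmetric])
  also have "\<dots> = (\<Prod>i<Suc n. \<Sum>a\<in>A. f i a)" using Suc by simp
  finally show ?case .
qed

lemma seqs_lset: "seqs n = lset UNIV n"
  by (simp add: seqs_def lset_def)

lemma sum_seqs_prod:
  "(\<Sum>xs\<in>seqs n. \<Prod>i<n. f i (xs!i)) = (\<Prod>i<n. \<Sum>a\<in>(UNIV::'a::finite set). (f i a :: 'b::comm_semiring_1))"
  unfolding seqs_lset by (rule sum_lset_prod) simp

lemma sum_seqs_prod_const:
  "(\<Sum>xs\<in>seqs n. \<Prod>i<n. g (xs!i)) = (\<Sum>a\<in>(UNIV::'a::finite set). (g a :: 'b::comm_semiring_1)) ^ n"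
  using sum_seqs_prod[where f="\<lambda>i. g" and n=n] by simp

lemma finite_seqs[simp]: "finite (seqs n :: 'a::finite list set)"
  unfolding seqs_lset by (rule finite_lset) simp

lemma sum_seqs2_prod:
  "(\<Sum>us\<in>seqs n. \<Sum>xs\<in>seqs n. \<Prod>i<n. g (us!i) (xs!i)) =
   (\<Sum>a\<in>(UNIV::'a::finite set). \<Sum>b\<in>(UNIV::'b::finite set). (g a b :: 'c::comm_semiring_1)) ^ n"
proof -
  have "(\<Sum>us\<in>seqs n. \<Sum>xs\<in>seqs n. \<Prod>i<n. g (us!i) (xs!i)) = (\<Sum>us\<in>seqs n. \<Prod>i<n. \<Sum>b\<in>UNIV. g (us!i) b)"
    by (rule sum.cong[OF refl]) (rule sum_seqs_prod)
  also have "\<dots> = (\<Sum>a\<in>(UNIV::'a::finite set). \<Sum>b\<in>(UNIV::'b::finite set). (g a b :: 'c::comm_semiring_1)) ^ n" by (rule sum_seqs_prod_const)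
  finally show ?thesis .
qed

lemma prod_two_if:
  fixes i j K :: nat
  assumes "i < K" "j < K" "i \<noteq> j"
  shows "(\<Prod>k<K. (if k = i then a else if k = j then b else 1)) = (a * b :: real)"
proof -
  have "(\<Prod>k<K. (if k = i then a else if k = j then b else 1)) =
        (\<Prod>k<K. (if k = i then a else 1) * (if k = j then b else 1))"
    by (rule prod.cong) (use assms in auto)
  also have "\<dots> = (\<Prod>k<K. (if k = i then a else 1)) * (\<Prod>k<K. (if k = j then b else 1))"
    by (rule prod.distrib)
  also have "(\<Prod>k<K. (if k = i then a else 1)) = a" using assms(1) by (subst prod.delta) auto
  also have "(\<Prod>k<K. (if k = j then b else 1)) = b" using assms(2) by (subst prod.delta) auto
  finally show ?thesis .
qed

lemma cb_pair:
  fixes q f g :: "'b \<Rightarrow> real" and i j K :: nat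
  assumes S: "finite S" and i: "i < K" and j: "j < K" and ij: "i \<noteq> j"
  shows "(\<Sum>c\<in>lset S K. (\<Prod>k<K. q (c!k)) * f (c!i) * g (c!j)) =
         (\<Sum>u\<in>S. q u * f u) * (\<Sum>u\<in>S. q u * g u) * (\<Sum>u\<in>S. q u) ^ (K - 2)"
proof -
  define h where "h k u = q u * (if k = i then f u else if k = j then g u else (1::real))" for k u
  have "(\<Sum>c\<in>lset S K. (\<Prod>k<K. q (c!k)) * f (c!i) * g (c!j)) = (\<Sum>c\<in>lset S K. \<Prod>k<K. h k (c!k))"
  proof (rule sum.cong[OF refl])
    fix c
    have "(\<Prod>k<K. h k (c!k)) = (\<Prod>k<K. q (c!k)) * (\<Prod>k<K. if k = i then f (c!k) else if k = j then g (c!k) else 1)"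
      unfolding h_def by (rule prod.distrib)
    also have "(\<Prod>k<K. if k = i then f (c!k) else if k = j then g (c!k) else 1) =
       (\<Prod>k<K. if k = i then f (c!i) else if k = j then g (c!j) else 1)"
      by (rule prod.cong) auto
    also have "\<dots> = f (c!i) * g (c!j)" by (rule prod_two_if[OF i j ij])
    finally show "(\<Prod>k<K. q (c!k)) * f (c!i) * g (c!j) = (\<Prod>k<K. h k (c!k))" by (simp add: mult.assoc)
  qed
  also have "\<dots> = (\<Prod>k<K. \<Sum>u\<in>S. h k u)" by (rule sum_lset_prod[OF S])
  also have "\<dots> = (\<Prod>k<K. (if k = i then (\<Sum>u\<in>S. q u * f u) else if k = j then (\<Sum>u\<in>S. q u * g u) else 1) * (if k = i \<or> k = j then 1 else (\<Sum>u\<in>S. q u)))"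
    by (rule prod.cong) (auto simp: h_def)
  also have "\<dots> = (\<Sum>u\<in>S. q u * f u) * (\<Sum>u\<in>S. q u * g u) * (\<Prod>k<K. (if k = i \<or> k = j then 1 else (\<Sum>u\<in>S. q u)))"
    by (simp add: prod.distrib prod_two_if[OF i j ij])
  also have "(\<Prod>k<K. (if k = i \<or> k = j then 1 else (\<Sum>u\<in>S. q u))) = (\<Prod>k\<in>{..<K} - {i,j}. (\<Sum>u\<in>S. q u))"
    by (subst prod.mono_neutral_cong_left[of "{..<K}" "{..<K} - {i,j}"]) auto
  also have "\<dots> = (\<Sum>u\<in>S. q u) ^ (K - 2)"
    using i j ij by (simp add: card_Diff_subset numeral_2_eq_2)
  finally show ?thesis .
qed

lemma cb_single:
  fixes q f :: "'b \<Rightarrow> real" and i K :: nat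
  assumes S: "finite S" and i: "i < K"
  shows "(\<Sum>c\<in>lset S K. (\<Prod>k<K. q (c!k)) * f (c!i)) =
         (\<Sum>u\<in>S. q u * f u) * (\<Sum>u\<in>S. q u) ^ (K - 1)"
proof -
  define h where "h k u = q u * (if k = i then f u else (1::real))" for k u
  have "(\<Sum>c\<in>lset S K. (\<Prod>k<K. q (c!k)) * f (c!i)) = (\<Sum>c\<in>lset S K. \<Prod>k<K. h k (c!k))"
  proof (rule sum.cong[OF refl])
    fix c
    have "(\<Prod>k<K. h k (c!k)) = (\<Prod>k<K. q (c!k)) * (\<Prod>k<K. if k = i then f (c!k) else 1)"
      unfolding h_def by (rule prod.distrib)
    also have "(\<Prod>k<K. if k = i then f (c!k) else 1) = (\<Prod>k<K. if k = i then f (c!i) else 1)"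
      by (rule prod.cong) auto
    also have "\<dots> = f (c!i)" using i by (subst prod.delta) auto
    finally show "(\<Prod>k<K. q (c!k)) * f (c!i) = (\<Prod>k<K. h k (c!k))" by simp
  qed
  also have "\<dots> = (\<Prod>k<K. \<Sum>u\<in>S. h k u)" by (rule sum_lset_prod[OF S])
  also have "\<dots> = (\<Prod>k<K. (if k = i then (\<Sum>u\<in>S. q u * f u) else 1) * (if k = i then 1 else (\<Sum>u\<in>S. q u)))"
    by (rule prod.cong) (auto simp: h_def)
  also have "\<dots> = (\<Sum>u\<in>S. q u * f u) * (\<Prod>k<K. (if k = i then 1 else (\<Sum>u\<in>S. q u)))"
    using i by (simp add: prod.distrib)
  also have "(\<Prod>k<K. (if k = i then 1 else (\<Sum>u\<in>S. q u))) = (\<Prod>k\<in>{..<K} - {i}. (\<Sum>u\<in>S. q u))"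
    by (subst prod.mono_neutral_cong_left[of "{..<K}" "{..<K} - {i}"]) auto
  also have "\<dots> = (\<Sum>u\<in>S. q u) ^ (K - 1)"
    using i by (simp add: card_Diff_subset)
  finally show ?thesis .
qed

lemma cb_total:
  fixes q :: "'b \<Rightarrow> real"
  assumes S: "finite S"
  shows "(\<Sum>c\<in>lset S K. (\<Prod>k<K. q (c!k))) = (\<Sum>u\<in>S. q u) ^ K"
  using sum_lset_prod[OF S, where n=K and f="\<lambda>k. q"] by simp

lemma exists_le_expect:
  assumes "finite C" "\<And>c. c \<in> C \<Longrightarrow> w c \<ge> 0" "(\<Sum>c\<in>C. w c) = 1"
  shows "\<exists>c\<in>C. (f c::real) \<le> (\<Sum>c\<in>C. w c * f c)"
proof (rule ccontr)
  assume "\<not> ?thesis"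
  then have lt: "\<And>c. c \<in> C \<Longrightarrow> (\<Sum>c\<in>C. w c * f c) < f c" by force
  have "C \<noteq> {}" using assms(3) by auto
  have "\<exists>c\<in>C. w c > 0"
  proof (rule ccontr)
    assume "\<not> ?thesis"
    then have "\<And>c. c \<in> C \<Longrightarrow> w c = 0" using assms(2) by force
    then show False using assms(3) by simp
  qed
  then obtain c0 where c0: "c0 \<in> C" "w c0 > 0" by blast
  let ?E = "(\<Sum>c\<in>C. w c * f c)"
  have "(\<Sum>c\<in>C. w c * ?E) < (\<Sum>c\<in>C. w c * f c)"
    apply (rule sum_strict_mono_ex1[OF assms(1)])
    using lt assms(2) apply (simp add: mult_left_mono less_imp_le)
    using c0 lt by (auto intro!: bexI[of _ c0])
  also have "(\<Sum>c\<in>C. w c * ?E) = ?E" by (simp add: sum_distrib_right[symmetric] assms(3))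
  finally show False by simp
qed

definition Gf :: "('a::finite \<Rightarrow> 'b::finite \<Rightarrow> real) \<Rightarrow> ('a \<Rightarrow> 'b \<Rightarrow> real) \<Rightarrow> real \<Rightarrow> real" where
  "Gf p d t = (\<Sum>a\<in>UNIV. \<Sum>b\<in>UNIV. (if p a b = 0 then 0 else p a b * exp (t * d a b)))"

lemma Gf_nonneg: "(\<And>a b. p a b \<ge> 0) \<Longrightarrow> Gf p d t \<ge> 0"
  unfolding Gf_def by (intro sum_nonneg) auto

lemma Gf_deriv:
  "DERIV (Gf p d) 0 :> (\<Sum>a\<in>UNIV. \<Sum>b\<in>UNIV. (if p a b = 0 then 0 else p a b * d a b))"
  unfolding Gf_def[abs_def]
  apply (intro DERIV_sum)
  apply (auto intro!: derivative_eq_intros)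
  done

lemma Gf_zero: "Gf p d 0 = (\<Sum>a\<in>UNIV. \<Sum>b\<in>UNIV. p a b)"
  unfolding Gf_def by (intro sum.cong) auto

lemma exists_Gf_lt1:
  assumes tot: "(\<Sum>a\<in>UNIV. \<Sum>b\<in>UNIV. p a b) = 1"
    and D: "D = (\<Sum>a\<in>UNIV. \<Sum>b\<in>UNIV. (if p a b = 0 then 0 else p a b * d a b))"
  shows "D < 0 \<Longrightarrow> \<exists>t>0. Gf p d t < 1"
    and "D > 0 \<Longrightarrow> \<exists>t<0. Gf p d t < 1"
proof -
  have der: "DERIV (Gf p d) 0 :> D" using Gf_deriv D by simp
  have G0: "Gf p d 0 = 1" using Gf_zero[of p d] tot by metis
  show "D < 0 \<Longrightarrow> \<exists>t>0. Gf p d t < 1"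
  proof -
    assume "D < 0"
    from DERIV_neg_dec_right[OF der this] obtain e where "e > 0" "\<forall>h>0. h < e \<longrightarrow> Gf p d 0 > Gf p d (0 + h)" by blast
    then have "Gf p d (e/2) < 1" using G0 by auto
    then show ?thesis using \<open>e > 0\<close> by (intro exI[of _ "e/2"]) auto
  qed
  show "D > 0 \<Longrightarrow> \<exists>t<0. Gf p d t < 1"
  proof -
    assume "D > 0"
    from DERIV_pos_inc_left[OF der this] obtain e where "e > 0" "\<forall>h>0. h < e \<longrightarrow> Gf p d (0 - h) < Gf p d 0" by blast
    then have "Gf p d (-(e/2)) < 1" using G0 by auto
    then show ?thesis using \<open>e > 0\<close> by (intro exI[of _ "-(e/2)"]) auto
  qed
qed

lemma tail_bound:
  fixes p :: "'a::finite \<Rightarrow> 'b::finite \<Rightarrow> real"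
  assumes pnn: "\<And>a b. p a b \<ge> 0"
  shows "(\<Sum>us\<in>seqs n. \<Sum>xs\<in>seqs n. (\<Prod>i<n. p (us!i) (xs!i)) *
           (if (\<forall>i<n. p (us!i) (xs!i) \<noteq> 0) \<and> t * (\<Sum>i<n. d (us!i) (xs!i)) \<ge> 0 then 1 else 0))
         \<le> (Gf p d t) ^ n"
proof -
  define h where "h a b = (if p a b = 0 then 0 else p a b * exp (t * d a b))" for a b
  have hnn: "h a b \<ge> 0" for a b using pnn by (simp add: h_def)
  have "(\<Sum>us\<in>seqs n. \<Sum>xs\<in>seqs n. (\<Prod>i<n. p (us!i) (xs!i)) *
           (if (\<forall>i<n. p (us!i) (xs!i) \<noteq> 0) \<and> t * (\<Sum>i<n. d (us!i) (xs!i)) \<ge> 0 then 1 else 0))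
      \<le> (\<Sum>us\<in>seqs n. \<Sum>xs\<in>seqs n. \<Prod>i<n. h (us!i) (xs!i))"
  proof (intro sum_mono)
    fix us xs :: "_ list"
    show "(\<Prod>i<n. p (us!i) (xs!i)) *
           (if (\<forall>i<n. p (us!i) (xs!i) \<noteq> 0) \<and> t * (\<Sum>i<n. d (us!i) (xs!i)) \<ge> 0 then 1 else 0)
          \<le> (\<Prod>i<n. h (us!i) (xs!i))"
    proof (cases "\<forall>i<n. p (us!i) (xs!i) \<noteq> 0")
      case True
      note allnz = True
      then have eq: "(\<Prod>i<n. h (us!i) (xs!i)) = (\<Prod>i<n. p (us!i) (xs!i)) * exp (t * (\<Sum>i<n. d (us!i) (xs!i)))"
        by (simp add: h_def prod.distrib exp_sum sum_distrib_left)
      have pp: "(\<Prod>i<n. p (us!i) (xs!i)) \<ge> 0" using pnn by (simp add: prod_nonneg)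
      show ?thesis
      proof (cases "t * (\<Sum>i<n. d (us!i) (xs!i)) \<ge> 0")
        case True
        then have "1 \<le> exp (t * (\<Sum>i<n. d (us!i) (xs!i)))" by simp
        then have "(\<Prod>i<n. p (us!i) (xs!i)) * 1 \<le> (\<Prod>i<n. p (us!i) (xs!i)) * exp (t * (\<Sum>i<n. d (us!i) (xs!i)))"
          using pp by (intro mult_left_mono)
        then show ?thesis using eq True allnz by simp
      next
        case False
        then show ?thesis using eq pp by simp
      qed
    next
      case False
      then obtain i where "i < n" "p (us!i) (xs!i) = 0" by blast
      then have "(\<Prod>i<n. p (us!i) (xs!i)) = 0" by (intro prod_zero) auto
      moreover have "(\<Prod>i<n. h (us!i) (xs!i)) \<ge> 0" using hnn by (simp add: prod_nonneg)
      ultimately show ?thesis using False by auto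
    qed
  qed
  also have "\<dots> = (\<Sum>a\<in>UNIV. \<Sum>b\<in>UNIV. h a b) ^ n" by (rule sum_seqs2_prod)
  also have "\<dots> = (Gf p d t) ^ n" by (simp add: Gf_def h_def)
  finally show ?thesis .
qed

definition pr1 :: "nat \<Rightarrow> ('a \<Rightarrow> real) \<Rightarrow> 'a list \<Rightarrow> real" where
  "pr1 n f xs = (\<Prod>i<n. f (xs!i))"
definition pr2 :: "nat \<Rightarrow> ('a \<Rightarrow> 'b \<Rightarrow> real) \<Rightarrow> 'a list \<Rightarrow> 'b list \<Rightarrow> real" where
  "pr2 n f xs ys = (\<Prod>i<n. f (xs!i) (ys!i))"
definition pr3 :: "nat \<Rightarrow> ('a \<Rightarrow> 'b \<Rightarrow> 'c \<Rightarrow> real) \<Rightarrow> 'a list \<Rightarrow> 'b list \<Rightarrow> 'c list \<Rightarrow> real" where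
  "pr3 n f xs ys zs = (\<Prod>i<n. f (xs!i) (ys!i) (zs!i))"

lemma pr1_nn: "(\<And>a. f a \<ge> 0) \<Longrightarrow> pr1 n f xs \<ge> 0" by (simp add: pr1_def prod_nonneg)
lemma pr2_nn: "(\<And>a b. f a b \<ge> 0) \<Longrightarrow> pr2 n f xs ys \<ge> 0" by (simp add: pr2_def prod_nonneg)
lemma pr3_nn: "(\<And>a b c. f a b c \<ge> 0) \<Longrightarrow> pr3 n f xs ys zs \<ge> 0" by (simp add: pr3_def prod_nonneg)

lemma sum_pr1: "(\<Sum>xs\<in>seqs n. pr1 n f xs) = (\<Sum>a\<in>(UNIV::'a::finite set). f a) ^ n"
  unfolding pr1_def by (rule sum_seqs_prod_const)

lemma sum_pr2_right: "(\<Sum>ys\<in>seqs n. pr2 n f xs ys) = pr1 n (\<lambda>a. \<Sum>b\<in>(UNIV::'b::finite set). f a b) xs"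
  unfolding pr1_def pr2_def by (rule sum_seqs_prod)

lemma sum_pr2_left: "(\<Sum>xs\<in>seqs n. pr2 n f xs ys) = pr1 n (\<lambda>b. \<Sum>a\<in>(UNIV::'a::finite set). f a b) ys"
  unfolding pr1_def pr2_def by (rule sum_seqs_prod)

lemma sum_pr3_3: "(\<Sum>zs\<in>seqs n. pr3 n f xs ys zs) = pr2 n (\<lambda>a b. \<Sum>c\<in>(UNIV::'c::finite set). f a b c) xs ys"
  unfolding pr3_def pr2_def by (rule sum_seqs_prod)

lemma pr1_mult: "pr1 n f xs * pr1 n g xs = pr1 n (\<lambda>a. f a * g a) xs"
  by (simp add: pr1_def prod.distrib)
lemma pr2_mult: "pr2 n f xs ys * pr2 n g xs ys = pr2 n (\<lambda>a b. f a b * g a b) xs ys"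
  by (simp add: pr2_def prod.distrib)

lemma pr1_le1: "(\<And>a. f a \<ge> 0) \<Longrightarrow> (\<And>a. f a \<le> 1) \<Longrightarrow> pr1 n f xs \<le> 1"
  unfolding pr1_def by (rule prod_le_1) auto

locale wz =
  fixes PXZ :: "'x::finite \<Rightarrow> 'z::finite \<Rightarrow> real"
    and W :: "'y::finite \<Rightarrow> 'z \<Rightarrow> 'x \<Rightarrow> real"
    and K0 :: "'x \<Rightarrow> 'u::finite \<Rightarrow> real"
    and PY :: "'u \<Rightarrow> 'z \<Rightarrow> 'y \<Rightarrow> real"
  assumes PXZ_nn: "\<And>x z. PXZ x z \<ge> 0"
    and PXZ_sum: "(\<Sum>x\<in>UNIV. \<Sum>z\<in>UNIV. PXZ x z) = 1"
    and W_nn: "\<And>y z x. W y z x \<ge> 0"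
    and W_sum: "\<And>y z. (\<Sum>x\<in>UNIV. W y z x) = 1"
    and K_nn: "\<And>x u. K0 x u \<ge> 0"
    and K_sum: "\<And>x. (\<Sum>u\<in>UNIV. K0 x u) = 1"
    and PY_nn: "\<And>u z y. PY u z y \<ge> 0"
    and PY_sum: "\<And>u z. (\<Sum>y\<in>UNIV. PY u z y) = 1"
    and factor: "\<And>u x y z. PXZ x z * K0 x u * PY u z y =
                   (\<Sum>x'\<in>UNIV. PXZ x' z * K0 x' u * PY u z y) * W y z x"
begin

definition "px x = (\<Sum>z\<in>UNIV. PXZ x z)"
definition "pz z = (\<Sum>x\<in>UNIV. PXZ x z)"
definition "pzx x z = PXZ x z / px x"
definition "jux u x = px x * K0 x u"
definition "pu u = (\<Sum>x\<in>UNIV. jux u x)"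
definition "qxu u x = jux u x / pu u"
definition "juz u z = (\<Sum>x\<in>UNIV. PXZ x z * K0 x u)"
definition "qzu u z = juz u z / pu u"

lemma px_nn: "px x \<ge> 0" unfolding px_def by (simp add: sum_nonneg PXZ_nn)
lemma pz_nn: "pz z \<ge> 0" unfolding pz_def by (simp add: sum_nonneg PXZ_nn)
lemma px_sum: "(\<Sum>x\<in>UNIV. px x) = 1" unfolding px_def using PXZ_sum by simp
lemma pz_sum: "(\<Sum>z\<in>UNIV. pz z) = 1" unfolding pz_def by (subst sum.swap) (rule PXZ_sum)
lemma px0: "px x = 0 \<Longrightarrow> PXZ x z = 0"
  using sum_nonneg_eq_0_iff[of UNIV "PXZ x"] PXZ_nn unfolding px_def by auto
lemma PXZ_split: "PXZ x z = px x * pzx x z"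
  using px0[of x z] by (cases "px x = 0") (auto simp: pzx_def)
lemma pzx_nn: "pzx x z \<ge> 0" unfolding pzx_def by (simp add: PXZ_nn px_nn)
lemma pzx_sum_le: "(\<Sum>z\<in>UNIV. pzx x z) \<le> 1"
  unfolding pzx_def by (cases "px x = 0") (simp_all add: sum_divide_distrib[symmetric] px_def[symmetric])
lemma jux_nn: "jux u x \<ge> 0" unfolding jux_def by (simp add: px_nn K_nn)
lemma pu_nn: "pu u \<ge> 0" unfolding pu_def by (simp add: sum_nonneg jux_nn)
lemma pu_sum: "(\<Sum>u\<in>UNIV. pu u) = 1"
  unfolding pu_def jux_def
  by (subst sum.swap) (simp add: sum_distrib_left[symmetric] K_sum px_sum)
lemma pu0: "pu u = 0 \<Longrightarrow> jux u x = 0"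
  using sum_nonneg_eq_0_iff[of UNIV "\<lambda>x. jux u x"] jux_nn unfolding pu_def by auto
lemma qxu_nn: "qxu u x \<ge> 0" unfolding qxu_def by (simp add: jux_nn pu_nn)
lemma pu_qxu: "pu u * qxu u x = jux u x"
  using pu0[of u x] by (cases "pu u = 0") (auto simp: qxu_def)
lemma qxu_sum_le: "(\<Sum>x\<in>UNIV. qxu u x) \<le> 1"
  unfolding qxu_def by (cases "pu u = 0") (simp_all add: sum_divide_distrib[symmetric] pu_def[symmetric])
lemma sum_pu_qxu: "(\<Sum>u\<in>UNIV. pu u * qxu u x) = px x"
  by (simp add: pu_qxu jux_def sum_distrib_left[symmetric] K_sum)
lemma juz_nn: "juz u z \<ge> 0" unfolding juz_def by (simp add: sum_nonneg PXZ_nn K_nn)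
lemma qxu_pzx: "qxu u x * pzx x z = PXZ x z * K0 x u / pu u"
proof (cases "px x = 0")
  case True then show ?thesis using px0[OF True] by (simp add: qxu_def jux_def)
next
  case False then show ?thesis by (simp add: qxu_def jux_def pzx_def)
qed
lemma qzu_eq: "qzu u z = (\<Sum>x\<in>UNIV. qxu u x * pzx x z)"
  by (simp add: qxu_pzx qzu_def juz_def sum_divide_distrib)
lemma qzu_nn: "qzu u z \<ge> 0" unfolding qzu_def by (simp add: juz_nn pu_nn)
lemma juz_sum: "(\<Sum>z\<in>UNIV. juz u z) = pu u"
  unfolding juz_def pu_def jux_def px_def
  by (subst sum.swap) (simp add: sum_distrib_right)
lemma qzu_sum_le: "(\<Sum>z\<in>UNIV. qzu u z) \<le> 1"
  unfolding qzu_def by (cases "pu u = 0") (simp_all add: sum_divide_distrib[symmetric] juz_sum)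
lemma pu0z: "pu u = 0 \<Longrightarrow> juz u z = 0"
  using sum_nonneg_eq_0_iff[of UNIV "\<lambda>z. juz u z"] juz_nn juz_sum by auto
lemma pu_qzu: "pu u * qzu u z = juz u z"
  using pu0z[of u z] by (cases "pu u = 0") (auto simp: qzu_def)
lemma sum_pu_qzu: "(\<Sum>u\<in>UNIV. pu u * qzu u z) = pz z"
  unfolding pu_qzu juz_def pz_def
  by (subst sum.swap) (simp add: sum_distrib_left[symmetric] K_sum)
lemma letter_factor: "qxu u x * pzx x z * PY u z y = (\<Sum>x'\<in>UNIV. qxu u x' * pzx x' z * PY u z y) * W y z x"
proof -
  have "qxu u x * pzx x z * PY u z y = PXZ x z * K0 x u * PY u z y / pu u" for x
    by (simp add: qxu_pzx)
  then show ?thesis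
    by (simp add: factor[where u=u and x=x and y=y and z=z] sum_divide_distrib[symmetric])
qed

end

context wz begin

lemma pxb_sum: "(\<Sum>x\<in>seqs n. pr1 n px x) = 1" by (simp add: sum_pr1 px_sum)
lemma pub_sum: "(\<Sum>u\<in>seqs n. pr1 n pu u) = 1" by (simp add: sum_pr1 pu_sum)
lemma pzxb_sum_le: "(\<Sum>z\<in>seqs n. pr2 n pzx x z) \<le> 1"
  unfolding sum_pr2_right by (rule pr1_le1) (auto simp: sum_nonneg pzx_nn pzx_sum_le)
lemma qxb_sum_le: "(\<Sum>x\<in>seqs n. pr2 n qxu u x) \<le> 1"
  unfolding sum_pr2_right by (rule pr1_le1) (auto simp: sum_nonneg qxu_nn qxu_sum_le)
lemma qzb_sum_le: "(\<Sum>z\<in>seqs n. pr2 n qzu u z) \<le> 1"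
  unfolding sum_pr2_right by (rule pr1_le1) (auto simp: sum_nonneg qzu_nn qzu_sum_le)

lemma sum_qxb_pzxb: "(\<Sum>x\<in>seqs n. pr2 n qxu u x * pr2 n pzx x z) = pr2 n qzu u z"
proof -
  have "(\<Sum>x\<in>seqs n. pr2 n qxu u x * pr2 n pzx x z) = (\<Sum>x\<in>seqs n. \<Prod>i<n. qxu (u!i) (x!i) * pzx (x!i) (z!i))"
    by (simp add: pr2_def prod.distrib)
  also have "\<dots> = (\<Prod>i<n. \<Sum>a\<in>UNIV. qxu (u!i) a * pzx a (z!i))"
    by (rule sum_seqs_prod)
  also have "\<dots> = pr2 n qzu u z" by (simp add: pr2_def qzu_eq)
  finally show ?thesis .
qed

lemma sum_pub_qxb: "(\<Sum>u\<in>seqs n. pr1 n pu u * pr2 n qxu u x) = pr1 n px x"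
proof -
  have "(\<Sum>u\<in>seqs n. pr1 n pu u * pr2 n qxu u x) = (\<Sum>u\<in>seqs n. \<Prod>i<n. pu (u!i) * qxu (u!i) (x!i))"
    by (simp add: pr1_def pr2_def prod.distrib)
  also have "\<dots> = (\<Prod>i<n. \<Sum>a\<in>UNIV. pu a * qxu a (x!i))"
    by (rule sum_seqs_prod)
  also have "\<dots> = pr1 n px x" by (simp add: pr1_def sum_pu_qxu)
  finally show ?thesis .
qed

lemma sum_pub_qzb: "(\<Sum>u\<in>seqs n. pr1 n pu u * pr2 n qzu u z) = pr1 n pz z"
proof -
  have "(\<Sum>u\<in>seqs n. pr1 n pu u * pr2 n qzu u z) = (\<Sum>u\<in>seqs n. \<Prod>i<n. pu (u!i) * qzu (u!i) (z!i))"
    by (simp add: pr1_def pr2_def prod.distrib)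
  also have "\<dots> = (\<Prod>i<n. \<Sum>a\<in>UNIV. pu a * qzu a (z!i))"
    by (rule sum_seqs_prod)
  also have "\<dots> = pr1 n pz z" by (simp add: pr1_def sum_pu_qzu)
  finally show ?thesis .
qed

lemma qyb_sum: "(\<Sum>y\<in>seqs n. pr3 n PY u z y) = 1"
  unfolding sum_pr3_3 by (simp add: pr2_def PY_sum)

lemma Wb_sum: "(\<Sum>x\<in>seqs n. pr3 n W y z x) = 1"
  unfolding sum_pr3_3 by (simp add: pr2_def W_sum)

lemma block_factor:
  "pr2 n qxu u x * pr2 n pzx x z * pr3 n PY u z y =
   (\<Sum>x'\<in>seqs n. pr2 n qxu u x' * pr2 n pzx x' z * pr3 n PY u z y) * pr3 n W y z x"
proof -
  have e: "pr2 n qxu u x' * pr2 n pzx x' z * pr3 n PY u z y = (\<Prod>i<n. qxu (u!i) (x'!i) * pzx (x'!i) (z!i) * PY (u!i) (z!i) (y!i))" for x'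
    by (simp add: pr2_def pr3_def prod.distrib)
  have "(\<Sum>x'\<in>seqs n. pr2 n qxu u x' * pr2 n pzx x' z * pr3 n PY u z y) =
        (\<Prod>i<n. \<Sum>a\<in>UNIV. qxu (u!i) a * pzx a (z!i) * PY (u!i) (z!i) (y!i))"
    unfolding e by (rule sum_seqs_prod)
  moreover have "pr2 n qxu u x * pr2 n pzx x z * pr3 n PY u z y =
     (\<Prod>i<n. (\<Sum>a\<in>UNIV. qxu (u!i) a * pzx a (z!i) * PY (u!i) (z!i) (y!i)) * W (y!i) (z!i) (x!i))"
    unfolding e by (rule prod.cong[OF refl]) (rule letter_factor)
  ultimately show ?thesis by (simp add: prod.distrib pr3_def)
qed

lemma PXZ_block: "(\<Prod>i<n. PXZ (x!i) (z!i)) = pr1 n px x * pr2 n pzx x z"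
  by (simp add: pr1_def pr2_def prod.distrib[symmetric] PXZ_split[symmetric])

end

definition binset :: "nat \<Rightarrow> nat \<Rightarrow> nat set" where
  "binset L m = {(m-1)*L ..< m*L}"

lemma finite_binset[simp]: "finite (binset L m)" by (simp add: binset_def)

lemma sum_regroup: "(\<Sum>k<T*L. f k) = (\<Sum>m\<in>{1..T}. \<Sum>k\<in>binset L m. (f k :: real))"
proof (induction T)
  case 0 then show ?case by simp
next
  case (Suc T)
  have "(\<Sum>k<Suc T * L. f k) = (\<Sum>k<T*L. f k) + (\<Sum>k\<in>{T*L..<Suc T * L}. f k)"
    unfolding atLeast0LessThan[symmetric] by (rule sum.atLeastLessThan_concat[symmetric]) auto
  also have "(\<Sum>k\<in>{T*L..<Suc T * L}. f k) = (\<Sum>k\<in>binset L (Suc T). f k)"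
    by (simp add: binset_def)
  moreover have "{1..Suc T} = insert (Suc T) {1..T}" by auto
  ultimately show ?case using Suc by (simp add: add.commute)
qed

lemma binset_mem: "(L::nat) \<ge> 1 \<Longrightarrow> k \<in> binset L (k div L + 1)"
proof -
  assume L: "L \<ge> 1"
  have e: "k div L * L + k mod L = k" by simp
  have "k mod L < L" using L by simp
  then have "k < k div L * L + L" using e by linarith
  then show ?thesis unfolding binset_def using e
    by (simp add: algebra_simps)
qed

lemma binset_div: "m \<ge> 1 \<Longrightarrow> k \<in> binset L m \<Longrightarrow> k div L + 1 = m"
proof -
  assume m: "m \<ge> 1" and k: "k \<in> binset L m"
  then have "(m-1)*L \<le> k" "k < m*L" by (auto simp: binset_def)
  then have "k div L = m - 1"
    using m by (intro div_nat_eqI) (auto simp: mult.commute)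
  then show ?thesis using m by simp
qed

lemma binset_range: "(L::nat) \<ge> 1 \<Longrightarrow> k < T*L \<Longrightarrow> k div L + 1 \<in> {1..T}"
  using less_mult_imp_div_less[of k T L] by auto

lemma binset_sub: "m \<in> {1..T} \<Longrightarrow> binset L m \<subseteq> {..<T*L}"
  by (auto simp: binset_def) (meson le_less_trans mult_le_mono1 less_le_trans)

lemma card_binset: "m \<ge> 1 \<Longrightarrow> card (binset L m) = L"
proof -
  assume "m \<ge> 1"
  then obtain m' where "m = Suc m'" by (cases m) auto
  then show ?thesis by (simp add: binset_def)
qed
  

context wz begin

definition "Gs n c xs = (\<Sum>k<length c. pr2 n qxu (c!k) xs)"
definition "enc n L c xs m = (if Gs n c xs > 0 then (\<Sum>k\<in>binset L m. pr2 n qxu (c!k) xs) / Gs n c xs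
                              else (if m = 1 then 1 else 0))"
definition "Sd n L c m zs = (\<Sum>k\<in>binset L m. pr2 n qzu (c!k) zs)"
definition "lam n L c m zs k = (if Sd n L c m zs > 0 then pr2 n qzu (c!k) zs / Sd n L c m zs
                               else (if k = (m-1)*L then 1 else 0))"
definition "dec n L c m zs ys = (\<Sum>k\<in>binset L m. lam n L c m zs k * pr3 n PY (c!k) zs ys)"

lemma qxb_nn: "pr2 n qxu u x \<ge> 0" by (rule pr2_nn) (rule qxu_nn)
lemma qzb_nn: "pr2 n qzu u z \<ge> 0" by (rule pr2_nn) (rule qzu_nn)
lemma qyb_nn: "pr3 n PY u z y \<ge> 0" by (rule pr3_nn) (rule PY_nn)
lemma pzxb_nn: "pr2 n pzx x z \<ge> 0" by (rule pr2_nn) (rule pzx_nn)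
lemma pxb_nn: "pr1 n px x \<ge> 0" by (rule pr1_nn) (rule px_nn)
lemma pub_nn: "pr1 n pu x \<ge> 0" by (rule pr1_nn) (rule pu_nn)
lemma pzb_nn: "pr1 n pz x \<ge> 0" by (rule pr1_nn) (rule pz_nn)

lemma Gs_nn: "Gs n c xs \<ge> 0" unfolding Gs_def by (simp add: sum_nonneg qxb_nn)
lemma Sd_nn: "Sd n L c m zs \<ge> 0" unfolding Sd_def by (simp add: sum_nonneg qzb_nn)

lemma enc_nn: "enc n L c xs m \<ge> 0"
  unfolding enc_def using Gs_nn by (auto simp: sum_nonneg qxb_nn)

lemma enc_sum:
  assumes "length c = T * L" "T \<ge> 1"
  shows "(\<Sum>m\<in>{1..T}. enc n L c xs m) = 1"
proof (cases "Gs n c xs > 0")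
  case True
  have "(\<Sum>m\<in>{1..T}. (\<Sum>k\<in>binset L m. pr2 n qxu (c!k) xs)) = Gs n c xs"
    unfolding Gs_def assms(1) by (rule sum_regroup[symmetric])
  then show ?thesis using True unfolding enc_def by (simp add: sum_divide_distrib[symmetric])
next
  case False
  then show ?thesis using assms(2) unfolding enc_def by (simp add: sum.delta)
qed

lemma lam_nn: "lam n L c m zs k \<ge> 0"
  unfolding lam_def using Sd_nn by (auto simp: qzb_nn)

lemma lam_sum:
  assumes "m \<ge> 1" "L \<ge> 1"
  shows "(\<Sum>k\<in>binset L m. lam n L c m zs k) = 1"
proof (cases "Sd n L c m zs > 0")
  case True
  then show ?thesis unfolding lam_def by (simp add: sum_divide_distrib[symmetric] Sd_def[symmetric])
next
  case False
  have "(m-1)*L \<in> binset L m" using assms unfolding binset_def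
    by (cases m) auto
  then show ?thesis using False unfolding lam_def by (simp add: sum.delta)
qed

lemma dec_nn: "dec n L c m zs ys \<ge> 0"
  unfolding dec_def by (intro sum_nonneg mult_nonneg_nonneg lam_nn qyb_nn)

lemma dec_sum:
  assumes "m \<ge> 1" "L \<ge> 1"
  shows "(\<Sum>ys\<in>seqs n. dec n L c m zs ys) = 1"
proof -
  have "(\<Sum>ys\<in>seqs n. dec n L c m zs ys) = (\<Sum>k\<in>binset L m. lam n L c m zs k * (\<Sum>ys\<in>seqs n. pr3 n PY (c!k) zs ys))"
    unfolding dec_def by (subst sum.swap) (simp add: sum_distrib_left)
  also have "\<dots> = 1" using lam_sum[OF assms] by (simp add: qyb_sum)
  finally show ?thesis .
qed

lemma protocol:
  assumes "length c = T * L" "T \<ge> 1" "L \<ge> 1"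
  shows "is_protocol n T (enc n L c) (dec n L c)"
  unfolding is_protocol_def using assms enc_nn enc_sum dec_nn dec_sum by auto

lemma GE:
  assumes "m \<in> {1..T}" "length c = T * L"
  shows "Gs n c xs * enc n L c xs m = (\<Sum>k\<in>binset L m. pr2 n qxu (c!k) xs)"
proof (cases "Gs n c xs > 0")
  case True then show ?thesis by (simp add: enc_def)
next
  case False
  then have "Gs n c xs = 0" using Gs_nn[of n c xs] by simp
  then have z: "\<forall>k\<in>{..<length c}. pr2 n qxu (c!k) xs = 0"
    unfolding Gs_def by (subst sum_nonneg_eq_0_iff[symmetric]) (auto simp: qxb_nn)
  have "binset L m \<subseteq> {..<length c}" using binset_sub[OF assms(1)] assms(2) by simp
  then have "(\<Sum>k\<in>binset L m. pr2 n qxu (c!k) xs) = 0" using z by (intro sum.neutral) auto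
  then show ?thesis using \<open>Gs n c xs = 0\<close> by simp
qed

lemma dec_dev:
  assumes m: "m \<ge> 1" and L: "L \<ge> 1" and k: "k \<in> binset L m" and pos: "pr2 n qzu (c!k) zs > 0"
  shows "(\<Sum>ys\<in>seqs n. \<bar>dec n L c m zs ys - pr3 n PY (c!k) zs ys\<bar>) \<le> 2 * (1 - lam n L c m zs k)"
proof -
  let ?B = "binset L m"
  let ?l = "lam n L c m zs"
  let ?q = "\<lambda>k ys. pr3 n PY (c!k) zs ys"
  have ls: "(\<Sum>k'\<in>?B. ?l k') = 1" by (rule lam_sum[OF m L])
  have "dec n L c m zs ys - ?q k ys = (\<Sum>k'\<in>?B. ?l k' * (?q k' ys - ?q k ys))" for ys
    unfolding dec_def by (simp add: right_diff_distrib sum_subtractf sum_distrib_right[symmetric] ls)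
  then have "(\<Sum>ys\<in>seqs n. \<bar>dec n L c m zs ys - ?q k ys\<bar>) = (\<Sum>ys\<in>seqs n. \<bar>\<Sum>k'\<in>?B. ?l k' * (?q k' ys - ?q k ys)\<bar>)"
    by simp
  also have "\<dots> \<le> (\<Sum>ys\<in>seqs n. \<Sum>k'\<in>?B. ?l k' * \<bar>?q k' ys - ?q k ys\<bar>)"
    by (intro sum_mono order.trans[OF sum_abs]) (simp add: abs_mult lam_nn)
  also have "\<dots> = (\<Sum>k'\<in>?B. ?l k' * (\<Sum>ys\<in>seqs n. \<bar>?q k' ys - ?q k ys\<bar>))"
    by (subst sum.swap) (simp add: sum_distrib_left)
  also have "\<dots> \<le> (\<Sum>k'\<in>?B. ?l k' * (if k' = k then 0 else 2))"
  proof (intro sum_mono mult_left_mono lam_nn)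
    fix k' assume "k' \<in> ?B"
    have "(\<Sum>ys\<in>seqs n. \<bar>?q k' ys - ?q k ys\<bar>) \<le> (\<Sum>ys\<in>seqs n. ?q k' ys + ?q k ys)"
      by (intro sum_mono) (simp add: qyb_nn abs_le_iff)
    also have "\<dots> = 2" by (simp add: sum.distrib qyb_sum)
    finally show "(\<Sum>ys\<in>seqs n. \<bar>?q k' ys - ?q k ys\<bar>) \<le> (if k' = k then 0 else 2)" by simp
  qed
  also have "\<dots> = 2 * (\<Sum>k'\<in>?B. ?l k') - 2 * ?l k"
  proof -
    have "(\<Sum>k'\<in>?B. ?l k' * (if k' = k then 0 else 2)) = (\<Sum>k'\<in>?B. 2 * ?l k' - (if k' = k then 2 * ?l k else 0))"
      by (rule sum.cong) auto
    also have "\<dots> = 2 * (\<Sum>k'\<in>?B. ?l k') - 2 * ?l k"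
      using k by (simp add: sum_subtractf sum_distrib_left[symmetric] sum.delta)
    finally show ?thesis .
  qed
  finally show ?thesis using ls by simp
qed

end

lemma tri3: "\<bar>a - c\<bar> \<le> \<bar>a - b\<bar> + \<bar>b - (c::real)\<bar>" by arith

lemma sum4_out: "(\<Sum>x\<in>A. \<Sum>y\<in>B. \<Sum>z\<in>C. \<Sum>k\<in>D. f x y z k) = (\<Sum>k\<in>D. \<Sum>x\<in>A. \<Sum>y\<in>B. \<Sum>z\<in>C. (f x y z k :: real))"
proof -
  have "(\<Sum>x\<in>A. \<Sum>y\<in>B. \<Sum>z\<in>C. \<Sum>k\<in>D. f x y z k) = (\<Sum>x\<in>A. \<Sum>y\<in>B. \<Sum>k\<in>D. \<Sum>z\<in>C. f x y z k)"
    by (intro sum.cong refl) (rule sum.swap)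
  also have "\<dots> = (\<Sum>x\<in>A. \<Sum>k\<in>D. \<Sum>y\<in>B. \<Sum>z\<in>C. f x y z k)"
    by (intro sum.cong refl) (rule sum.swap)
  also have "\<dots> = (\<Sum>k\<in>D. \<Sum>x\<in>A. \<Sum>y\<in>B. \<Sum>z\<in>C. f x y z k)"
    by (rule sum.swap)
  finally show ?thesis .
qed

lemma sum3_rot: "(\<Sum>x\<in>A. \<Sum>y\<in>B. \<Sum>z\<in>C. f x y z) = (\<Sum>y\<in>B. \<Sum>z\<in>C. \<Sum>x\<in>A. (f x y z :: real))"
proof -
  have "(\<Sum>x\<in>A. \<Sum>y\<in>B. \<Sum>z\<in>C. f x y z) = (\<Sum>y\<in>B. \<Sum>x\<in>A. \<Sum>z\<in>C. f x y z)" by (rule sum.swap)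
  also have "\<dots> = (\<Sum>y\<in>B. \<Sum>z\<in>C. \<Sum>x\<in>A. f x y z)" by (rule sum.cong[OF refl]) (rule sum.swap)
  finally show ?thesis .
qed

context wz begin

lemma error_bound:
  assumes len: "length c = T * L" and T: "T \<ge> 1" and L: "L \<ge> 1"
  shows "protocol_error PXZ W n T (enc n L c) (dec n L c) \<le>
     (\<Sum>x\<in>seqs n. \<bar>pr1 n px x - Gs n c x / real (T*L)\<bar>) +
     2 / real (T*L) * (\<Sum>k<T*L. \<Sum>z\<in>seqs n. pr2 n qzu (c!k) z * (1 - lam n L c (k div L + 1) z k))"
proof -
  define K where "K = T * L"
  have Kpos: "real K > 0" using T L by (simp add: K_def)
  define E where "E = enc n L c"
  define D where "D = dec n L c"
  define S :: "'x list set" where "S = seqs n"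
  define SY :: "'y list set" where "SY = seqs n"
  define SZ :: "'z list set" where "SZ = seqs n"
  define P where "P = induced_joint PXZ n T E D"
  define PYZ where "PYZ y z = (\<Sum>x\<in>S. P x y z)" for y z
  define Wb where "Wb y z x = pr3 n W y z x" for y z x
  define ED where "ED x y z = (\<Sum>m\<in>{1..T}. E x m * D m z y)" for x y z
  define GX where "GX x = Gs n c x / real K" for x
  define Gam where "Gam x y z = GX x * pr2 n pzx x z * ED x y z" for x y z
  define Gam2 where "Gam2 x y z = (\<Sum>k<K. pr2 n qxu (c!k) x * pr2 n pzx x z * pr3 n PY (c!k) z y) / real K" for x y z
  define Gam2YZ where "Gam2YZ y z = (\<Sum>x\<in>S. Gam2 x y z)" for y z
  have Pdef: "P x y z = pr1 n px x * pr2 n pzx x z * ED x y z" for x y z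
    unfolding P_def induced_joint_def ED_def PXZ_block by simp
  have ED_nn: "ED x y z \<ge> 0" for x y z
    unfolding ED_def E_def D_def by (intro sum_nonneg mult_nonneg_nonneg enc_nn dec_nn)
  have Wb_nn: "Wb y z x \<ge> 0" for y z x unfolding Wb_def by (rule pr3_nn) (rule W_nn)
  have Wb_sum: "(\<Sum>x\<in>S. Wb y z x) = 1" for y z unfolding Wb_def S_def by (rule Wb_sum)
  have ED_sum: "(\<Sum>y\<in>SY. ED x y z) = 1" for x z
  proof -
    have "(\<Sum>y\<in>SY. ED x y z) = (\<Sum>m\<in>{1..T}. E x m * (\<Sum>y\<in>SY. D m z y))"
      unfolding ED_def by (subst sum.swap) (simp add: sum_distrib_left)
    also have "\<dots> = (\<Sum>m\<in>{1..T}. E x m)"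
      using L unfolding D_def SY_def by (intro sum.cong) (auto simp: dec_sum)
    also have "\<dots> = 1" unfolding E_def using enc_sum[OF len T] .
    finally show ?thesis .
  qed
  have Gam2_fact: "Gam2 x y z = Gam2YZ y z * Wb y z x" for x y z
  proof -
    have "Gam2 x y z = (\<Sum>k<K. (\<Sum>x'\<in>S. pr2 n qxu (c!k) x' * pr2 n pzx x' z * pr3 n PY (c!k) z y) * Wb y z x) / real K"
      unfolding Gam2_def Wb_def S_def by (subst block_factor) simp
    also have "\<dots> = (\<Sum>x'\<in>S. \<Sum>k<K. pr2 n qxu (c!k) x' * pr2 n pzx x' z * pr3 n PY (c!k) z y) * Wb y z x / real K"
      by (subst sum.swap) (simp add: sum_distrib_right)
    also have "\<dots> = Gam2YZ y z * Wb y z x"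
      unfolding Gam2YZ_def Gam2_def
      by (simp add: sum_divide_distrib[symmetric])
    finally show ?thesis .
  qed
  have Gam_alt: "Gam x y z = (\<Sum>k<K. pr2 n qxu (c!k) x * pr2 n pzx x z * D (k div L + 1) z y) / real K" for x y z
  proof -
    have "Gam x y z = (\<Sum>m\<in>{1..T}. (Gs n c x * E x m) * (pr2 n pzx x z * D m z y)) / real K"
      unfolding Gam_def GX_def ED_def
      by (simp add: sum_distrib_left sum_divide_distrib mult_ac)
    also have "\<dots> = (\<Sum>m\<in>{1..T}. \<Sum>k\<in>binset L m. pr2 n qxu (c!k) x * pr2 n pzx x z * D (k div L + 1) z y) / real K"
    proof -
      have "(Gs n c x * E x m) * (pr2 n pzx x z * D m z y) =
            (\<Sum>k\<in>binset L m. pr2 n qxu (c!k) x * pr2 n pzx x z * D (k div L + 1) z y)" if m: "m \<in> {1..T}" for m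
      proof -
        have "(Gs n c x * E x m) * (pr2 n pzx x z * D m z y) =
              (\<Sum>k\<in>binset L m. pr2 n qxu (c!k) x) * (pr2 n pzx x z * D m z y)"
          unfolding E_def using GE[OF m len] by simp
        also have "\<dots> = (\<Sum>k\<in>binset L m. pr2 n qxu (c!k) x * pr2 n pzx x z * D (k div L + 1) z y)"
          unfolding sum_distrib_right using m binset_div[of m] by (intro sum.cong) auto
        finally show ?thesis .
      qed
      then show ?thesis by simp
    qed
    also have "\<dots> = (\<Sum>k<K. pr2 n qxu (c!k) x * pr2 n pzx x z * D (k div L + 1) z y) / real K"
      unfolding K_def by (simp add: sum_regroup)
    finally show ?thesis .
  qed
  have err: "protocol_error PXZ W n T E D =
     (1/2) * (\<Sum>x\<in>S. \<Sum>y\<in>SY. \<Sum>z\<in>SZ. \<bar>P x y z - PYZ y z * Wb y z x\<bar>)"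
    unfolding protocol_error_def P_def PYZ_def Wb_def S_def SY_def SZ_def Let_def pr3_def by simp
  have pw: "\<bar>P x y z - PYZ y z * Wb y z x\<bar> \<le> \<bar>P x y z - Gam2 x y z\<bar> + \<bar>Gam2YZ y z - PYZ y z\<bar> * Wb y z x" for x y z
  proof -
    have "P x y z - PYZ y z * Wb y z x = (P x y z - Gam2 x y z) + (Gam2YZ y z - PYZ y z) * Wb y z x"
      using Gam2_fact[of x y z] by (simp add: algebra_simps)
    moreover have "\<bar>(Gam2YZ y z - PYZ y z) * Wb y z x\<bar> = \<bar>Gam2YZ y z - PYZ y z\<bar> * Wb y z x"
      using Wb_nn[of y z x] by (simp add: abs_mult)
    ultimately show ?thesis using abs_triangle_ineq[of "P x y z - Gam2 x y z" "(Gam2YZ y z - PYZ y z) * Wb y z x"]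
      by simp
  qed
  have sc: "(\<Sum>x\<in>S. \<Sum>y\<in>SY. \<Sum>z\<in>SZ. \<bar>Gam2YZ y z - PYZ y z\<bar> * Wb y z x) \<le>
            (\<Sum>x\<in>S. \<Sum>y\<in>SY. \<Sum>z\<in>SZ. \<bar>P x y z - Gam2 x y z\<bar>)"
  proof -
    have "(\<Sum>x\<in>S. \<Sum>y\<in>SY. \<Sum>z\<in>SZ. \<bar>Gam2YZ y z - PYZ y z\<bar> * Wb y z x) =
          (\<Sum>y\<in>SY. \<Sum>z\<in>SZ. \<bar>Gam2YZ y z - PYZ y z\<bar> * (\<Sum>x\<in>S. Wb y z x))"
      by (subst sum3_rot) (simp add: sum_distrib_left)
    also have "\<dots> = (\<Sum>y\<in>SY. \<Sum>z\<in>SZ. \<bar>\<Sum>x\<in>S. Gam2 x y z - P x y z\<bar>)"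
      by (simp add: Wb_sum Gam2YZ_def PYZ_def sum_subtractf)
    also have "\<dots> \<le> (\<Sum>y\<in>SY. \<Sum>z\<in>SZ. \<Sum>x\<in>S. \<bar>P x y z - Gam2 x y z\<bar>)"
      by (intro sum_mono order.trans[OF sum_abs]) (simp add: abs_minus_commute)
    also have "\<dots> = (\<Sum>x\<in>S. \<Sum>y\<in>SY. \<Sum>z\<in>SZ. \<bar>P x y z - Gam2 x y z\<bar>)"
      by (rule sum3_rot[symmetric])
    finally show ?thesis .
  qed
  have sd: "(\<Sum>x\<in>S. \<Sum>y\<in>SY. \<Sum>z\<in>SZ. \<bar>P x y z - Gam x y z\<bar>) \<le> (\<Sum>x\<in>S. \<bar>pr1 n px x - GX x\<bar>)"
  proof (intro sum_mono)
    fix x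
    have "(\<Sum>y\<in>SY. \<Sum>z\<in>SZ. \<bar>P x y z - Gam x y z\<bar>) = (\<Sum>y\<in>SY. \<Sum>z\<in>SZ. \<bar>pr1 n px x - GX x\<bar> * pr2 n pzx x z * ED x y z)"
      unfolding Pdef Gam_def
      by (intro sum.cong refl) (simp add: abs_mult pzxb_nn ED_nn left_diff_distrib[symmetric])
    also have "\<dots> = \<bar>pr1 n px x - GX x\<bar> * (\<Sum>z\<in>SZ. pr2 n pzx x z * (\<Sum>y\<in>SY. ED x y z))"
      by (subst sum.swap) (simp add: sum_distrib_left mult_ac)
    also have "\<dots> = \<bar>pr1 n px x - GX x\<bar> * (\<Sum>z\<in>SZ. pr2 n pzx x z)"
      by (simp add: ED_sum)
    also have "\<dots> \<le> \<bar>pr1 n px x - GX x\<bar> * 1"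
      unfolding SZ_def by (intro mult_left_mono pzxb_sum_le) simp
    finally show "(\<Sum>y\<in>SY. \<Sum>z\<in>SZ. \<bar>P x y z - Gam x y z\<bar>) \<le> \<bar>pr1 n px x - GX x\<bar>" by simp
  qed
  define Dl where "Dl k z y = D (k div L + 1) z y - pr3 n PY (c!k) z y" for k z y
  have e1: "\<bar>Gam x y z - Gam2 x y z\<bar> \<le> (\<Sum>k<K. pr2 n qxu (c!k) x * pr2 n pzx x z * \<bar>Dl k z y\<bar>) / real K" for x y z
  proof -
    have "Gam x y z - Gam2 x y z = (\<Sum>k<K. pr2 n qxu (c!k) x * pr2 n pzx x z * Dl k z y) / real K"
      unfolding Gam_alt Gam2_def Dl_def by (simp add: diff_divide_distrib[symmetric] sum_subtractf[symmetric] right_diff_distrib)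
    also have "\<bar>\<dots>\<bar> \<le> (\<Sum>k<K. \<bar>pr2 n qxu (c!k) x * pr2 n pzx x z * Dl k z y\<bar>) / real K"
      using Kpos by (simp add: divide_right_mono sum_abs)
    also have "\<dots> = (\<Sum>k<K. pr2 n qxu (c!k) x * pr2 n pzx x z * \<bar>Dl k z y\<bar>) / real K"
      by (simp add: abs_mult qxb_nn pzxb_nn)
    finally show ?thesis .
  qed
  have e3: "(\<Sum>x\<in>S. \<Sum>y\<in>SY. \<Sum>z\<in>SZ. pr2 n qxu (c!k) x * pr2 n pzx x z * \<bar>Dl k z y\<bar>) =
            (\<Sum>z\<in>SZ. pr2 n qzu (c!k) z * (\<Sum>y\<in>SY. \<bar>Dl k z y\<bar>))" for k
  proof -
    have "(\<Sum>x\<in>S. \<Sum>y\<in>SY. \<Sum>z\<in>SZ. pr2 n qxu (c!k) x * pr2 n pzx x z * \<bar>Dl k z y\<bar>) =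
          (\<Sum>y\<in>SY. \<Sum>z\<in>SZ. \<Sum>x\<in>S. pr2 n qxu (c!k) x * pr2 n pzx x z * \<bar>Dl k z y\<bar>)"
      by (rule sum3_rot)
    also have "\<dots> = (\<Sum>z\<in>SZ. \<Sum>y\<in>SY. \<Sum>x\<in>S. pr2 n qxu (c!k) x * pr2 n pzx x z * \<bar>Dl k z y\<bar>)"
      by (rule sum.swap)
    also have "\<dots> = (\<Sum>z\<in>SZ. \<Sum>y\<in>SY. (\<Sum>x\<in>S. pr2 n qxu (c!k) x * pr2 n pzx x z) * \<bar>Dl k z y\<bar>)"
      by (simp add: sum_distrib_right)
    also have "\<dots> = (\<Sum>z\<in>SZ. pr2 n qzu (c!k) z * (\<Sum>y\<in>SY. \<bar>Dl k z y\<bar>))"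
      unfolding S_def by (simp add: sum_qxb_pzxb sum_distrib_left)
    finally show ?thesis .
  qed
  have e4: "pr2 n qzu (c!k) z * (\<Sum>y\<in>SY. \<bar>Dl k z y\<bar>) \<le> pr2 n qzu (c!k) z * (2 * (1 - lam n L c (k div L + 1) z k))"
    if k: "k < K" for k z
  proof (cases "pr2 n qzu (c!k) z > 0")
    case True
    have "(\<Sum>y\<in>SY. \<bar>Dl k z y\<bar>) \<le> 2 * (1 - lam n L c (k div L + 1) z k)"
      unfolding Dl_def D_def SY_def
      by (rule dec_dev[OF _ L binset_mem[OF L] True]) simp
    then show ?thesis using True by (simp add: mult_left_mono)
  next
    case False
    then have "pr2 n qzu (c!k) z = 0" using qzb_nn[of n "c!k" z] by simp
    then show ?thesis by simp
  qed
  have se: "(\<Sum>x\<in>S. \<Sum>y\<in>SY. \<Sum>z\<in>SZ. \<bar>Gam x y z - Gam2 x y z\<bar>) \<le>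
        2 / real K * (\<Sum>k<K. \<Sum>z\<in>SZ. pr2 n qzu (c!k) z * (1 - lam n L c (k div L + 1) z k))"
  proof -
    have "(\<Sum>x\<in>S. \<Sum>y\<in>SY. \<Sum>z\<in>SZ. \<bar>Gam x y z - Gam2 x y z\<bar>) \<le>
          (\<Sum>x\<in>S. \<Sum>y\<in>SY. \<Sum>z\<in>SZ. (\<Sum>k<K. pr2 n qxu (c!k) x * pr2 n pzx x z * \<bar>Dl k z y\<bar>) / real K)"
      by (intro sum_mono e1)
    also have "\<dots> = (\<Sum>k<K. \<Sum>x\<in>S. \<Sum>y\<in>SY. \<Sum>z\<in>SZ. pr2 n qxu (c!k) x * pr2 n pzx x z * \<bar>Dl k z y\<bar>) / real K"
      unfolding sum_divide_distrib[symmetric] by (subst sum4_out) (rule refl)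
    also have "\<dots> = (\<Sum>k<K. \<Sum>z\<in>SZ. pr2 n qzu (c!k) z * (\<Sum>y\<in>SY. \<bar>Dl k z y\<bar>)) / real K"
      by (simp add: e3)
    also have "\<dots> \<le> (\<Sum>k<K. \<Sum>z\<in>SZ. pr2 n qzu (c!k) z * (2 * (1 - lam n L c (k div L + 1) z k))) / real K"
      using Kpos by (intro divide_right_mono sum_mono e4) auto
    also have "\<dots> = 2 / real K * (\<Sum>k<K. \<Sum>z\<in>SZ. pr2 n qzu (c!k) z * (1 - lam n L c (k div L + 1) z k))"
      by (simp add: sum_distrib_left sum_divide_distrib algebra_simps diff_divide_distrib)
    finally show ?thesis .
  qed
  have "protocol_error PXZ W n T E D \<le> (1/2) * (\<Sum>x\<in>S. \<Sum>y\<in>SY. \<Sum>z\<in>SZ. \<bar>P x y z - Gam2 x y z\<bar> + \<bar>Gam2YZ y z - PYZ y z\<bar> * Wb y z x)"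
    unfolding err by (intro mult_left_mono sum_mono pw) auto
  also have "\<dots> \<le> (\<Sum>x\<in>S. \<Sum>y\<in>SY. \<Sum>z\<in>SZ. \<bar>P x y z - Gam2 x y z\<bar>)"
    using sc by (simp add: sum.distrib)
  also have "\<dots> \<le> (\<Sum>x\<in>S. \<Sum>y\<in>SY. \<Sum>z\<in>SZ. \<bar>P x y z - Gam x y z\<bar> + \<bar>Gam x y z - Gam2 x y z\<bar>)"
    by (intro sum_mono) (rule tri3)
  also have "\<dots> \<le> (\<Sum>x\<in>S. \<bar>pr1 n px x - GX x\<bar>) +
      2 / real K * (\<Sum>k<K. \<Sum>z\<in>SZ. pr2 n qzu (c!k) z * (1 - lam n L c (k div L + 1) z k))"
    using sd se by (simp add: sum.distrib)
  finally show ?thesis unfolding E_def D_def GX_def K_def S_def SZ_def .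
qed

end

locale cbk =
  fixes S :: "'b set" and q :: "'b \<Rightarrow> real" and K :: nat
  assumes S_fin: "finite S" and q_nn: "\<And>u. q u \<ge> 0" and q_sum: "(\<Sum>u\<in>S. q u) = 1"
begin

definition Exc :: "('b list \<Rightarrow> real) \<Rightarrow> real" where "Exc f = (\<Sum>c\<in>lset S K. (\<Prod>k<K. q (c!k)) * f c)"

lemma w_nn: "(\<Prod>k<K. q (c!k)) \<ge> 0" by (simp add: prod_nonneg q_nn)

lemma Exc_const: "Exc (\<lambda>c. a) = a"
  unfolding Exc_def by (simp add: sum_distrib_right[symmetric] cb_total[OF S_fin] q_sum)

lemma Exc_add: "Exc (\<lambda>c. f c + g c) = Exc f + Exc g"
  unfolding Exc_def by (simp add: distrib_left sum.distrib)

lemma Exc_diff: "Exc (\<lambda>c. f c - g c) = Exc f - Exc g"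
  unfolding Exc_def by (simp add: right_diff_distrib sum_subtractf)

lemma Exc_scale: "Exc (\<lambda>c. a * f c) = a * Exc f"
  unfolding Exc_def by (simp add: sum_distrib_left mult_ac)

lemma Exc_sum: "Exc (\<lambda>c. \<Sum>i\<in>I. f i c) = (\<Sum>i\<in>I. Exc (f i))"
  unfolding Exc_def by (simp add: sum_distrib_left sum.swap[of _ I])

lemma Exc_mono: "(\<And>c. c \<in> lset S K \<Longrightarrow> f c \<le> g c) \<Longrightarrow> Exc f \<le> Exc g"
  unfolding Exc_def by (intro sum_mono mult_left_mono w_nn) auto

lemma Exc_single: "k < K \<Longrightarrow> Exc (\<lambda>c. f (c!k)) = (\<Sum>u\<in>S. q u * f u)"
  unfolding Exc_def using cb_single[OF S_fin, of k K q f] q_sum by simp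

lemma Exc_pair: "k < K \<Longrightarrow> k' < K \<Longrightarrow> k \<noteq> k' \<Longrightarrow> Exc (\<lambda>c. f (c!k) * g (c!k')) = (\<Sum>u\<in>S. q u * f u) * (\<Sum>u\<in>S. q u * g u)"
  unfolding Exc_def using cb_pair[OF S_fin, of k K k' q f g] q_sum by (simp add: mult.assoc)

lemma Exc_exists: "K \<ge> 0 \<Longrightarrow> \<exists>c\<in>lset S K. f c \<le> Exc f"
  unfolding Exc_def
  by (rule exists_le_expect) (auto simp: finite_lset S_fin w_nn cb_total[OF S_fin] q_sum)

lemma var_bound:
  assumes K: "K \<ge> 1" and A_nn: "\<And>u. A u \<ge> 0"
  shows "Exc (\<lambda>c. ((\<Sum>u\<in>S. q u * A u) - (\<Sum>k<K. A (c!k)) / real K)\<^sup>2) \<le> (\<Sum>u\<in>S. q u * (A u)\<^sup>2) / real K"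
proof -
  define \<mu> where "\<mu> = (\<Sum>u\<in>S. q u * A u)"
  define V where "V = (\<Sum>u\<in>S. q u * (A u)\<^sup>2)"
  have EY: "Exc (\<lambda>c. (\<Sum>k<K. A (c!k))) = real K * \<mu>"
    by (simp add: Exc_sum Exc_single \<mu>_def)
  have pairs: "Exc (\<lambda>c. A (c!k) * A (c!k')) = (if k = k' then V else \<mu>\<^sup>2)" if "k < K" "k' < K" for k k'
  proof (cases "k = k'")
    case True
    then show ?thesis using Exc_single[OF that(1), of "\<lambda>u. A u * A u"] by (simp add: V_def power2_eq_square)
  next
    case False
    then show ?thesis using Exc_pair[OF that False] by (simp add: \<mu>_def power2_eq_square)
  qed
  have sq: "(\<Sum>k<K. A (c!k))\<^sup>2 = (\<Sum>k<K. \<Sum>k'<K. A (c!k) * A (c!k'))" for c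
    by (simp add: power2_eq_square sum_product)
  have inner: "(\<Sum>k'<K. (if k = k' then V else \<mu>\<^sup>2)) = V + (real K - 1) * \<mu>\<^sup>2" if "k < K" for k
  proof -
    have "(\<Sum>k'<K. (if k = k' then V else \<mu>\<^sup>2)) = (\<Sum>k'<K. \<mu>\<^sup>2 + (if k = k' then V - \<mu>\<^sup>2 else 0))"
      by (rule sum.cong) auto
    also have "\<dots> = real K * \<mu>\<^sup>2 + (V - \<mu>\<^sup>2)" using that by (simp add: sum.distrib)
    finally show ?thesis by (simp add: algebra_simps)
  qed
  have EY2: "Exc (\<lambda>c. (\<Sum>k<K. A (c!k))\<^sup>2) = real K * (V + (real K - 1) * \<mu>\<^sup>2)"
    unfolding sq Exc_sum by (simp add: pairs inner)
  have "Exc (\<lambda>c. (\<mu> - (\<Sum>k<K. A (c!k)) / real K)\<^sup>2) =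
        Exc (\<lambda>c. \<mu>\<^sup>2 - (2 * \<mu> / real K) * (\<Sum>k<K. A (c!k)) + (1 / (real K)\<^sup>2) * (\<Sum>k<K. A (c!k))\<^sup>2)"
    using K by (intro arg_cong[where f=Exc] ext) (simp add: power2_eq_square field_simps)
  also have "\<dots> = \<mu>\<^sup>2 - (2 * \<mu> / real K) * (real K * \<mu>) + (1 / (real K)\<^sup>2) * (real K * (V + (real K - 1) * \<mu>\<^sup>2))"
    by (simp only: Exc_add Exc_diff Exc_scale Exc_const EY EY2)
  also have "\<dots> = (V - \<mu>\<^sup>2) / real K"
    using K by (simp add: field_simps power2_eq_square)
  also have "\<dots> \<le> V / real K" by (simp add: divide_right_mono)
  finally show ?thesis unfolding \<mu>_def V_def .
qed

lemma abs_bound: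
  assumes K: "K \<ge> 1" and A_nn: "\<And>u. A u \<ge> 0" and a: "a > 0"
  shows "Exc (\<lambda>c. \<bar>(\<Sum>u\<in>S. q u * A u) - (\<Sum>k<K. A (c!k)) / real K\<bar>) \<le> (\<Sum>u\<in>S. q u * (A u)\<^sup>2) / (real K * 2 * a) + a / 2"
proof -
  have pt: "\<bar>d\<bar> \<le> d\<^sup>2 / (2 * a) + a / 2" for d :: real
  proof -
    have "0 \<le> (\<bar>d\<bar> - a)\<^sup>2" by simp
    then have "2 * a * \<bar>d\<bar> \<le> d\<^sup>2 + a\<^sup>2" by (simp add: power2_eq_square algebra_simps)
    then show ?thesis using a by (simp add: field_simps power2_eq_square)
  qed
  have "Exc (\<lambda>c. \<bar>(\<Sum>u\<in>S. q u * A u) - (\<Sum>k<K. A (c!k)) / real K\<bar>) \<le>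
        Exc (\<lambda>c. (1 / (2 * a)) * ((\<Sum>u\<in>S. q u * A u) - (\<Sum>k<K. A (c!k)) / real K)\<^sup>2 + a / 2)"
    by (rule Exc_mono) (use pt in simp)
  also have "\<dots> = (1 / (2 * a)) * Exc (\<lambda>c. ((\<Sum>u\<in>S. q u * A u) - (\<Sum>k<K. A (c!k)) / real K)\<^sup>2) + a / 2"
    by (simp only: Exc_add Exc_scale Exc_const)
  also have "\<dots> \<le> (1 / (2 * a)) * ((\<Sum>u\<in>S. q u * (A u)\<^sup>2) / real K) + a / 2"
    using var_bound[OF K A_nn] a by (intro add_right_mono mult_left_mono) auto
  finally show ?thesis by (simp add: field_simps)
qed

end

context wz begin

definition "tail1 n T0 = (\<Sum>u\<in>seqs n. \<Sum>x\<in>seqs n. pr1 n pu u * pr2 n qxu u x * (if pr2 n qxu u x > T0 * pr1 n px x then 1 else 0))"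
definition "tail2 n T1 = (\<Sum>u\<in>seqs n. \<Sum>z\<in>seqs n. pr1 n pu u * pr2 n qzu u z * (if pr2 n qzu u z < T1 * pr1 n pz z then 1 else 0))"

lemma cbk_inst: "cbk (seqs n :: 'u list set) (pr1 n pu)"
  by unfold_locales (auto simp: pub_nn pub_sum)

lemma soft_cov:
  assumes T0: "T0 > 0" and K: "K \<ge> 1"
  shows "cbk.Exc (seqs n) (pr1 n pu) K (\<lambda>c. \<Sum>x\<in>seqs n. \<bar>pr1 n px x - Gs n c x / real K\<bar>) \<le> 2 * tail1 n T0 + sqrt (T0 / real K)"
proof -
  interpret C: cbk "seqs n :: 'u list set" "pr1 n pu" K by (rule cbk_inst)
  define s where "s = sqrt (T0 / real K)"
  have Kpos: "real K > 0" using K by simp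
  have spos: "s > 0" using T0 Kpos by (simp add: s_def)
  have s2: "s * s = T0 / real K" using T0 Kpos by (simp add: s_def)
  define A where "A x u = pr2 n qxu u x * (if pr2 n qxu u x \<le> T0 * pr1 n px x then 1 else 0)" for x u
  define B where "B x u = pr2 n qxu u x * (if pr2 n qxu u x > T0 * pr1 n px x then 1 else 0)" for x u
  define q where "q = pr1 n pu"
  define \<mu> where "\<mu> x = (\<Sum>u\<in>seqs n. q u * A x u)" for x
  define \<beta> where "\<beta> x = (\<Sum>u\<in>seqs n. q u * B x u)" for x
  have AB: "pr2 n qxu u x = A x u + B x u" for x u by (simp add: A_def B_def)
  have A_nn: "A x u \<ge> 0" for x u by (simp add: A_def qxb_nn)
  have B_nn: "B x u \<ge> 0" for x u by (simp add: B_def qxb_nn)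
  have px_eq: "pr1 n px x = \<mu> x + \<beta> x" for x
    unfolding \<mu>_def \<beta>_def q_def sum_pub_qxb[symmetric, of n x] AB by (simp add: distrib_left sum.distrib)
  have Gs_eq: "Gs n c x = (\<Sum>k<K. A x (c!k)) + (\<Sum>k<K. B x (c!k))" if "c \<in> lset (seqs n) K" for c x
    using that unfolding Gs_def lset_def by (simp add: AB sum.distrib)
  have pt: "\<bar>pr1 n px x - Gs n c x / real K\<bar> \<le> \<beta> x + \<bar>\<mu> x - (\<Sum>k<K. A x (c!k)) / real K\<bar> + (\<Sum>k<K. B x (c!k)) / real K"
    if "c \<in> lset (seqs n) K" for c x
  proof -
    have "pr1 n px x - Gs n c x / real K = \<beta> x + (\<mu> x - (\<Sum>k<K. A x (c!k)) / real K) - (\<Sum>k<K. B x (c!k)) / real K"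
      using Gs_eq[OF that] px_eq[of x] by (simp add: add_divide_distrib)
    moreover have "\<beta> x \<ge> 0" unfolding \<beta>_def q_def by (intro sum_nonneg mult_nonneg_nonneg pub_nn B_nn)
    moreover have "(\<Sum>k<K. B x (c!k)) / real K \<ge> 0" using Kpos by (simp add: sum_nonneg B_nn)
    ultimately show ?thesis by linarith
  qed
  have EB: "C.Exc (\<lambda>c. (\<Sum>k<K. B x (c!k)) / real K) = \<beta> x" for x
  proof -
    have "C.Exc (\<lambda>c. (\<Sum>k<K. B x (c!k)) / real K) = C.Exc (\<lambda>c. (1 / real K) * (\<Sum>k<K. B x (c!k)))"
      by simp
    also have "\<dots> = (1 / real K) * (\<Sum>k<K. \<beta> x)"
      by (simp only: C.Exc_scale C.Exc_sum C.Exc_single \<beta>_def q_def lessThan_iff)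
        (simp add: C.Exc_single \<beta>_def q_def)
    also have "\<dots> = \<beta> x" using Kpos by simp
    finally show ?thesis .
  qed
  have EA: "C.Exc (\<lambda>c. \<bar>\<mu> x - (\<Sum>k<K. A x (c!k)) / real K\<bar>) \<le> pr1 n px x * s" for x
  proof (cases "pr1 n px x > 0")
    case True
    let ?a = "pr1 n px x * s"
    have apos: "?a > 0" using True spos by simp
    have "C.Exc (\<lambda>c. \<bar>\<mu> x - (\<Sum>k<K. A x (c!k)) / real K\<bar>) \<le> (\<Sum>u\<in>seqs n. q u * (A x u)\<^sup>2) / (real K * 2 * ?a) + ?a / 2"
      unfolding \<mu>_def q_def by (rule C.abs_bound[OF K A_nn apos])
    also have "(\<Sum>u\<in>seqs n. q u * (A x u)\<^sup>2) \<le> (\<Sum>u\<in>seqs n. q u * (A x u * (T0 * pr1 n px x)))"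
    proof (intro sum_mono mult_left_mono)
      fix u
      show "(A x u)\<^sup>2 \<le> A x u * (T0 * pr1 n px x)"
        unfolding power2_eq_square using A_nn[of x u] T0 pxb_nn[of n x] by (intro mult_left_mono) (auto simp: A_def)
    qed (simp add: q_def pub_nn)
    also have "\<dots> = T0 * pr1 n px x * \<mu> x" unfolding \<mu>_def by (simp add: sum_distrib_left mult_ac)
    also have "\<dots> \<le> T0 * pr1 n px x * pr1 n px x"
    proof -
      have "\<mu> x \<le> pr1 n px x" using px_eq[of x] unfolding \<beta>_def q_def
        by (simp add: sum_nonneg pub_nn B_nn)
      then show ?thesis using T0 True by (intro mult_left_mono) auto
    qed
    finally have "C.Exc (\<lambda>c. \<bar>\<mu> x - (\<Sum>k<K. A x (c!k)) / real K\<bar>) \<le> T0 * pr1 n px x * pr1 n px x / (real K * 2 * ?a) + ?a / 2"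
      using apos Kpos by (simp add: divide_right_mono)
    also have "T0 * pr1 n px x * pr1 n px x / (real K * 2 * ?a) = pr1 n px x * s / 2"
      using True spos Kpos s2 by (simp add: field_simps)
    finally show ?thesis by (simp add: mult.commute)
  next
    case False
    then have p0: "pr1 n px x = 0" using pxb_nn[of n x] by simp
    have "A x u = 0" for u unfolding A_def p0 using qxb_nn[of n u x] by auto
    then have "C.Exc (\<lambda>c. \<bar>\<mu> x - (\<Sum>k<K. A x (c!k)) / real K\<bar>) = 0"
      unfolding \<mu>_def by (simp add: C.Exc_const)
    then show ?thesis using p0 by simp
  qed
  have "C.Exc (\<lambda>c. \<Sum>x\<in>seqs n. \<bar>pr1 n px x - Gs n c x / real K\<bar>) \<le>
        C.Exc (\<lambda>c. \<Sum>x\<in>seqs n. \<beta> x + \<bar>\<mu> x - (\<Sum>k<K. A x (c!k)) / real K\<bar> + (\<Sum>k<K. B x (c!k)) / real K)"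
    by (intro C.Exc_mono sum_mono pt)
  also have "\<dots> = (\<Sum>x\<in>seqs n. \<beta> x + C.Exc (\<lambda>c. \<bar>\<mu> x - (\<Sum>k<K. A x (c!k)) / real K\<bar>) + \<beta> x)"
    by (simp only: C.Exc_sum C.Exc_add C.Exc_const EB)
  also have "\<dots> \<le> (\<Sum>x\<in>seqs n. \<beta> x + pr1 n px x * s + \<beta> x)"
    by (intro sum_mono add_right_mono add_left_mono EA)
  also have "\<dots> = 2 * (\<Sum>x\<in>seqs n. \<beta> x) + s"
    by (simp add: sum.distrib sum_distrib_right[symmetric] sum_distrib_left[symmetric] pxb_sum)
  also have "(\<Sum>x\<in>seqs n. \<beta> x) = tail1 n T0"
    unfolding \<beta>_def tail1_def B_def q_def by (subst sum.swap) (simp add: mult.assoc)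
  finally show ?thesis by (simp add: s_def)
qed

end

context wz begin

lemma dec_pt:
  assumes m: "m \<ge> 1" and L: "L \<ge> 1" and k: "k \<in> binset L m" and b: "b = (if pr2 n qzu (c!k) z < T1 * pr1 n pz z then 1 else 0)"
  shows "pr2 n qzu (c!k) z * (1 - lam n L c m z k) \<le>
         pr2 n qzu (c!k) z * b + (\<Sum>k'\<in>binset L m - {k}. pr2 n qzu (c!k') z) * (1 - b)"
proof -
  let ?q = "pr2 n qzu (c!k) z"
  let ?s = "\<Sum>k'\<in>binset L m - {k}. pr2 n qzu (c!k') z"
  have Sd: "Sd n L c m z = ?q + ?s" unfolding Sd_def using k by (simp add: sum.remove)
  have s_nn: "?s \<ge> 0" by (simp add: sum_nonneg qzb_nn)
  have q_nn: "?q \<ge> 0" by (rule qzb_nn)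
  have l1: "?q * (1 - lam n L c m z k) \<le> ?q" using q_nn lam_nn[of n L c m z k]
    by (simp add: mult_left_le)
  have l2: "?q * (1 - lam n L c m z k) \<le> ?s"
  proof (cases "Sd n L c m z > 0")
    case True
    then have "?q * (1 - lam n L c m z k) = ?q * ?s / (?q + ?s)"
      unfolding lam_def using Sd by (simp add: field_simps)
    also have "\<dots> \<le> ?s"
      using True Sd q_nn s_nn mult_nonneg_nonneg[OF s_nn s_nn] by (simp add: divide_le_eq algebra_simps)
    finally show ?thesis .
  next
    case False
    then have "?q = 0" using Sd q_nn s_nn by simp
    then show ?thesis using s_nn by simp
  qed
  show ?thesis using l1 l2 b by auto
qed

lemma dec_exp:
  assumes T1: "T1 > 0" and T: "T \<ge> 1" and L: "L \<ge> 1"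
  shows "cbk.Exc (seqs n) (pr1 n pu) (T*L) (\<lambda>c. \<Sum>k<T*L. \<Sum>z\<in>seqs n. pr2 n qzu (c!k) z * (1 - lam n L c (k div L + 1) z k))
         \<le> real (T*L) * (tail2 n T1 + (real L - 1) / T1)"
proof -
  define K where "K = T * L"
  interpret C: cbk "seqs n :: 'u list set" "pr1 n pu" K by (rule cbk_inst)
  define I where "I z u = (if pr2 n qzu u z < T1 * pr1 n pz z then 1 else (0::real))" for z u
  have perk: "C.Exc (\<lambda>c. \<Sum>z\<in>seqs n. pr2 n qzu (c!k) z * (1 - lam n L c (k div L + 1) z k))
         \<le> tail2 n T1 + (real L - 1) / T1" if kK: "k < K" for k
  proof -
    define m where "m = k div L + 1"
    have m1: "m \<ge> 1" by (simp add: m_def)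
    have km: "k \<in> binset L m" unfolding m_def by (rule binset_mem[OF L])
    have mT: "m \<in> {1..T}" unfolding m_def using binset_range[OF L] kK K_def by simp
    have binK: "binset L m \<subseteq> {..<K}" using binset_sub[OF mT] K_def by simp
    define Bk where "Bk = binset L m - {k}"
    have cardB: "card Bk = L - 1" unfolding Bk_def using km card_binset[OF m1] by simp
    have "C.Exc (\<lambda>c. \<Sum>z\<in>seqs n. pr2 n qzu (c!k) z * (1 - lam n L c m z k))
        \<le> C.Exc (\<lambda>c. \<Sum>z\<in>seqs n. pr2 n qzu (c!k) z * I z (c!k) + (\<Sum>k'\<in>Bk. pr2 n qzu (c!k') z * (1 - I z (c!k))))"
      unfolding Bk_def
      by (intro C.Exc_mono sum_mono) (unfold sum_distrib_right[symmetric], rule dec_pt[OF m1 L km], simp add: I_def)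
    also have "\<dots> = (\<Sum>z\<in>seqs n. (\<Sum>u\<in>seqs n. pr1 n pu u * (pr2 n qzu u z * I z u)) +
            (\<Sum>k'\<in>Bk. pr1 n pz z * (\<Sum>u\<in>seqs n. pr1 n pu u * (1 - I z u))))"
    proof -
      have "C.Exc (\<lambda>c. pr2 n qzu (c!k') z * (1 - I z (c!k))) = pr1 n pz z * (\<Sum>u\<in>seqs n. pr1 n pu u * (1 - I z u))"
        if "k' \<in> Bk" for k' z
      proof -
        have "k' < K" "k' \<noteq> k" using that binK unfolding Bk_def by auto
        then show ?thesis
          using C.Exc_pair[of k' k "\<lambda>u. pr2 n qzu u z" "\<lambda>u. 1 - I z u"] kK sum_pub_qzb[of n z]
          by simp
      qed
      moreover have "C.Exc (\<lambda>c. pr2 n qzu (c!k) z * I z (c!k)) = (\<Sum>u\<in>seqs n. pr1 n pu u * (pr2 n qzu u z * I z u))" for z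
        using C.Exc_single[OF kK, of "\<lambda>u. pr2 n qzu u z * I z u"] by simp
      ultimately show ?thesis
        by (simp only: C.Exc_sum C.Exc_add) simp
    qed
    also have "\<dots> = tail2 n T1 + (real L - 1) * (\<Sum>u\<in>seqs n. pr1 n pu u * (\<Sum>z\<in>seqs n. pr1 n pz z * (1 - I z u)))"
    proof -
      have "(\<Sum>z\<in>seqs n. (\<Sum>u\<in>seqs n. pr1 n pu u * (pr2 n qzu u z * I z u))) = tail2 n T1"
        unfolding tail2_def I_def by (subst sum.swap) (simp add: mult.assoc)
      moreover have "(\<Sum>z\<in>seqs n. \<Sum>k'\<in>Bk. pr1 n pz z * (\<Sum>u\<in>seqs n. pr1 n pu u * (1 - I z u)))
         = (real L - 1) * (\<Sum>u\<in>seqs n. pr1 n pu u * (\<Sum>z\<in>seqs n. pr1 n pz z * (1 - I z u)))"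
      proof -
        have "(\<Sum>z\<in>seqs n. \<Sum>k'\<in>Bk. pr1 n pz z * (\<Sum>u\<in>seqs n. pr1 n pu u * (1 - I z u)))
            = real (L - 1) * (\<Sum>z\<in>seqs n. \<Sum>u\<in>seqs n. pr1 n pu u * (pr1 n pz z * (1 - I z u)))"
          using cardB by (simp add: sum_distrib_left sum_distrib_right[symmetric] mult_ac)
        also have "\<dots> = (real L - 1) * (\<Sum>u\<in>seqs n. pr1 n pu u * (\<Sum>z\<in>seqs n. pr1 n pz z * (1 - I z u)))"
          using L by (subst sum.swap) (simp add: sum_distrib_left of_nat_diff)
        finally show ?thesis .
      qed
      ultimately show ?thesis by (simp add: sum.distrib)
    qed
    also have "\<dots> \<le> tail2 n T1 + (real L - 1) * (1 / T1)"
    proof -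
      have "(\<Sum>u\<in>seqs n. pr1 n pu u * (\<Sum>z\<in>seqs n. pr1 n pz z * (1 - I z u))) \<le>
            (\<Sum>u\<in>seqs n. pr1 n pu u * (1 / T1))"
      proof (intro sum_mono mult_left_mono pub_nn)
        fix u :: "'u list"
        have "(\<Sum>z\<in>seqs n. pr1 n pz z * (1 - I z u)) \<le> (\<Sum>z\<in>seqs n. pr2 n qzu u z / T1)"
        proof (intro sum_mono)
          fix z :: "'z list"
          show "pr1 n pz z * (1 - I z u) \<le> pr2 n qzu u z / T1"
            using T1 qzb_nn[of n u z] by (auto simp: I_def field_simps mult.commute)
        qed
        also have "\<dots> \<le> 1 / T1"
          using qzb_sum_le[of n u] T1 by (simp add: sum_divide_distrib[symmetric] divide_right_mono)
        finally show "(\<Sum>z\<in>seqs n. pr1 n pz z * (1 - I z u)) \<le> 1 / T1" .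
      qed
      also have "\<dots> = 1 / T1" by (simp add: sum_divide_distrib[symmetric] pub_sum)
      finally show ?thesis using L by (intro add_left_mono mult_left_mono) auto
    qed
    finally show ?thesis unfolding m_def by simp
  qed
  have "C.Exc (\<lambda>c. \<Sum>k<K. \<Sum>z\<in>seqs n. pr2 n qzu (c!k) z * (1 - lam n L c (k div L + 1) z k))
        \<le> (\<Sum>k<K. tail2 n T1 + (real L - 1) / T1)"
    by (subst C.Exc_sum) (intro sum_mono perk, simp)
  then show ?thesis unfolding K_def by simp
qed

end

lemma ln_pr2_pos: "(\<And>i. i < n \<Longrightarrow> f (xs!i) (ys!i) > 0) \<Longrightarrow> ln (pr2 n f xs ys) = (\<Sum>i<n. ln (f (xs!i) (ys!i)))"
  unfolding pr2_def by (rule ln_prod) (auto dest: less_imp_neq[symmetric])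
lemma ln_pr1_pos: "(\<And>i. i < n \<Longrightarrow> f (xs!i) > 0) \<Longrightarrow> ln (pr1 n f xs) = (\<Sum>i<n. ln (f (xs!i)))"
  unfolding pr1_def by (rule ln_prod) (auto dest: less_imp_neq[symmetric])

locale joint =
  fixes p :: "'a::finite \<Rightarrow> 'b::finite \<Rightarrow> real"
  assumes p_nn: "\<And>a b. p a b \<ge> 0" and p_sum: "(\<Sum>a\<in>UNIV. \<Sum>b\<in>UNIV. p a b) = 1"
begin

definition "pa a = (\<Sum>b\<in>UNIV. p a b)"
definition "pb b = (\<Sum>a\<in>UNIV. p a b)"
definition "dd \<gamma> a b = ln (p a b / (pa a * pb b)) - \<gamma>"
definition "MI = (\<Sum>a\<in>UNIV. \<Sum>b\<in>UNIV. if p a b = 0 then 0 else p a b * log 2 (p a b / (pa a * pb b)))"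

lemma pa_pos: "p a b > 0 \<Longrightarrow> pa a > 0"
  unfolding pa_def by (rule order.strict_trans2[of _ "p a b"]) (auto intro!: member_le_sum p_nn)
lemma pb_pos: "p a b > 0 \<Longrightarrow> pb b > 0"
  unfolding pb_def by (rule order.strict_trans2[of _ "p a b"]) (auto intro!: member_le_sum p_nn)

lemma dd_expand: "p a b > 0 \<Longrightarrow> dd \<gamma> a b = ln (p a b) - ln (pa a) - ln (pb b) - \<gamma>"
  using pa_pos[of a b] pb_pos[of a b] by (simp add: dd_def ln_div ln_mult)

lemma Dsum: "(\<Sum>a\<in>UNIV. \<Sum>b\<in>UNIV. (if p a b = 0 then 0 else p a b * dd \<gamma> a b)) = ln 2 * MI - \<gamma>"
proof -
  have "(\<Sum>a\<in>UNIV. \<Sum>b\<in>UNIV. (if p a b = 0 then 0 else p a b * dd \<gamma> a b)) =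
        (\<Sum>a\<in>UNIV. \<Sum>b\<in>UNIV. (ln 2 * (if p a b = 0 then 0 else p a b * log 2 (p a b / (pa a * pb b))) - \<gamma> * p a b))"
    by (intro sum.cong refl) (auto simp: dd_def log_def algebra_simps)
  also have "\<dots> = ln 2 * MI - \<gamma>"
    by (simp add: sum_subtractf sum_distrib_left[symmetric] MI_def p_sum)
  finally show ?thesis .
qed

lemma upper:
  assumes t: "t > 0"
  shows "(\<Sum>us\<in>seqs n. \<Sum>xs\<in>seqs n. pr2 n p us xs *
           (if pr2 n p us xs > exp (real n * \<gamma>) * pr1 n pa us * pr1 n pb xs then 1 else 0))
         \<le> (Gf p (dd \<gamma>) t) ^ n"
proof -
  have "(\<Sum>us\<in>seqs n. \<Sum>xs\<in>seqs n. pr2 n p us xs *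
           (if pr2 n p us xs > exp (real n * \<gamma>) * pr1 n pa us * pr1 n pb xs then 1 else 0))
      \<le> (\<Sum>us\<in>seqs n. \<Sum>xs\<in>seqs n. (\<Prod>i<n. p (us!i) (xs!i)) *
           (if (\<forall>i<n. p (us!i) (xs!i) \<noteq> 0) \<and> t * (\<Sum>i<n. dd \<gamma> (us!i) (xs!i)) \<ge> 0 then 1 else 0))"
  proof (intro sum_mono)
    fix us xs
    show "pr2 n p us xs * (if pr2 n p us xs > exp (real n * \<gamma>) * pr1 n pa us * pr1 n pb xs then 1 else 0)
       \<le> (\<Prod>i<n. p (us!i) (xs!i)) *
           (if (\<forall>i<n. p (us!i) (xs!i) \<noteq> 0) \<and> t * (\<Sum>i<n. dd \<gamma> (us!i) (xs!i)) \<ge> 0 then 1 else 0)"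
    proof (cases "\<forall>i<n. p (us!i) (xs!i) \<noteq> 0")
      case False
      then have "pr2 n p us xs = 0" unfolding pr2_def by (auto intro: prod_zero)
      then show ?thesis by (simp add: prod_nonneg p_nn)
    next
      case True
      then have pos: "\<And>i. i < n \<Longrightarrow> p (us!i) (xs!i) > 0" using p_nn by (simp add: less_le)
      show ?thesis
      proof (cases "pr2 n p us xs > exp (real n * \<gamma>) * pr1 n pa us * pr1 n pb xs")
        case False then show ?thesis by (simp add: prod_nonneg p_nn)
      next
        case gt: True
        have p2: "pr2 n p us xs > 0" unfolding pr2_def by (rule prod_pos) (auto intro: pos)
        have pa_p: "pr1 n pa us > 0" unfolding pr1_def by (rule prod_pos) (auto intro: pa_pos pos)
        have pb_p: "pr1 n pb xs > 0" unfolding pr1_def by (rule prod_pos) (auto intro: pb_pos pos)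
        have "ln (exp (real n * \<gamma>) * pr1 n pa us * pr1 n pb xs) < ln (pr2 n p us xs)"
          using gt pa_p pb_p p2 by (subst ln_less_cancel_iff) auto
        then have "real n * \<gamma> + ln (pr1 n pa us) + ln (pr1 n pb xs) < ln (pr2 n p us xs)"
          using pa_p pb_p by (simp add: ln_mult)
        moreover have "ln (pr1 n pa us) = (\<Sum>i<n. ln (pa (us!i)))"
          by (rule ln_pr1_pos) (auto intro: pa_pos pos)
        moreover have "ln (pr1 n pb xs) = (\<Sum>i<n. ln (pb (xs!i)))"
          by (rule ln_pr1_pos) (auto intro: pb_pos pos)
        moreover have "ln (pr2 n p us xs) = (\<Sum>i<n. ln (p (us!i) (xs!i)))"
          by (rule ln_pr2_pos) (auto intro: pos)
        moreover have "(\<Sum>i<n. dd \<gamma> (us!i) (xs!i)) = (\<Sum>i<n. ln (p (us!i) (xs!i))) - (\<Sum>i<n. ln (pa (us!i))) - (\<Sum>i<n. ln (pb (xs!i))) - real n * \<gamma>"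
        proof -
          have "(\<Sum>i<n. dd \<gamma> (us!i) (xs!i)) = (\<Sum>i<n. ln (p (us!i) (xs!i)) - ln (pa (us!i)) - ln (pb (xs!i)) - \<gamma>)"
            by (intro sum.cong refl) (simp add: dd_expand pos)
          then show ?thesis by (simp add: sum_subtractf)
        qed
        ultimately have "(\<Sum>i<n. dd \<gamma> (us!i) (xs!i)) > 0" by linarith
        then show ?thesis using True t gt by (simp add: pr2_def)
      qed
    qed
  qed
  also have "\<dots> \<le> (Gf p (dd \<gamma>) t) ^ n" by (rule tail_bound[OF p_nn])
  finally show ?thesis .
qed

lemma lower:
  assumes t: "t < 0"
  shows "(\<Sum>us\<in>seqs n. \<Sum>xs\<in>seqs n. pr2 n p us xs *
           (if pr2 n p us xs < exp (real n * \<gamma>) * pr1 n pa us * pr1 n pb xs then 1 else 0))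
         \<le> (Gf p (dd \<gamma>) t) ^ n"
proof -
  have "(\<Sum>us\<in>seqs n. \<Sum>xs\<in>seqs n. pr2 n p us xs *
           (if pr2 n p us xs < exp (real n * \<gamma>) * pr1 n pa us * pr1 n pb xs then 1 else 0))
      \<le> (\<Sum>us\<in>seqs n. \<Sum>xs\<in>seqs n. (\<Prod>i<n. p (us!i) (xs!i)) *
           (if (\<forall>i<n. p (us!i) (xs!i) \<noteq> 0) \<and> t * (\<Sum>i<n. dd \<gamma> (us!i) (xs!i)) \<ge> 0 then 1 else 0))"
  proof (intro sum_mono)
    fix us xs
    show "pr2 n p us xs * (if pr2 n p us xs < exp (real n * \<gamma>) * pr1 n pa us * pr1 n pb xs then 1 else 0)
       \<le> (\<Prod>i<n. p (us!i) (xs!i)) *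
           (if (\<forall>i<n. p (us!i) (xs!i) \<noteq> 0) \<and> t * (\<Sum>i<n. dd \<gamma> (us!i) (xs!i)) \<ge> 0 then 1 else 0)"
    proof (cases "\<forall>i<n. p (us!i) (xs!i) \<noteq> 0")
      case False
      then have "pr2 n p us xs = 0" unfolding pr2_def by (auto intro: prod_zero)
      then show ?thesis by (simp add: prod_nonneg p_nn)
    next
      case True
      then have pos: "\<And>i. i < n \<Longrightarrow> p (us!i) (xs!i) > 0" using p_nn by (simp add: less_le)
      have p2: "pr2 n p us xs > 0" unfolding pr2_def by (rule prod_pos) (auto intro: pos)
      show ?thesis
      proof (cases "pr2 n p us xs < exp (real n * \<gamma>) * pr1 n pa us * pr1 n pb xs")
        case False then show ?thesis by (simp add: prod_nonneg p_nn)
      next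
        case gt: True
        have pa_p: "pr1 n pa us > 0" unfolding pr1_def by (rule prod_pos) (auto intro: pa_pos pos)
        have pb_p: "pr1 n pb xs > 0" unfolding pr1_def by (rule prod_pos) (auto intro: pb_pos pos)
        have "ln (pr2 n p us xs) < ln (exp (real n * \<gamma>) * pr1 n pa us * pr1 n pb xs)"
          using gt pa_p pb_p p2 by (subst ln_less_cancel_iff) auto
        then have "ln (pr2 n p us xs) < real n * \<gamma> + ln (pr1 n pa us) + ln (pr1 n pb xs)"
          using pa_p pb_p by (simp add: ln_mult)
        moreover have "ln (pr1 n pa us) = (\<Sum>i<n. ln (pa (us!i)))"
          by (rule ln_pr1_pos) (auto intro: pa_pos pos)
        moreover have "ln (pr1 n pb xs) = (\<Sum>i<n. ln (pb (xs!i)))"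
          by (rule ln_pr1_pos) (auto intro: pb_pos pos)
        moreover have "ln (pr2 n p us xs) = (\<Sum>i<n. ln (p (us!i) (xs!i)))"
          by (rule ln_pr2_pos) (auto intro: pos)
        moreover have "(\<Sum>i<n. dd \<gamma> (us!i) (xs!i)) = (\<Sum>i<n. ln (p (us!i) (xs!i))) - (\<Sum>i<n. ln (pa (us!i))) - (\<Sum>i<n. ln (pb (xs!i))) - real n * \<gamma>"
        proof -
          have "(\<Sum>i<n. dd \<gamma> (us!i) (xs!i)) = (\<Sum>i<n. ln (p (us!i) (xs!i)) - ln (pa (us!i)) - ln (pb (xs!i)) - \<gamma>)"
            by (intro sum.cong refl) (simp add: dd_expand pos)
          then show ?thesis by (simp add: sum_subtractf)
        qed
        ultimately have "(\<Sum>i<n. dd \<gamma> (us!i) (xs!i)) < 0" by linarith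
        then have "t * (\<Sum>i<n. dd \<gamma> (us!i) (xs!i)) \<ge> 0" using t by (simp add: mult_nonpos_nonpos less_imp_le)
        then show ?thesis using True gt by (simp add: pr2_def)
      qed
    qed
  qed
  also have "\<dots> \<le> (Gf p (dd \<gamma>) t) ^ n" by (rule tail_bound[OF p_nn])
  finally show ?thesis .
qed

lemma exp_upper: "\<gamma> > ln 2 * MI \<Longrightarrow> \<exists>t>0. Gf p (dd \<gamma>) t < 1"
  using exists_Gf_lt1(1)[OF p_sum Dsum[symmetric]] by simp
lemma exp_lower: "\<gamma> < ln 2 * MI \<Longrightarrow> \<exists>t<0. Gf p (dd \<gamma>) t < 1"
  using exists_Gf_lt1(2)[OF p_sum Dsum[symmetric]] by simp

end

context wz begin

lemma pz0: "pz z = 0 \<Longrightarrow> PXZ x z = 0"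
  using sum_nonneg_eq_0_iff[of UNIV "\<lambda>x. PXZ x z"] PXZ_nn unfolding pz_def by auto

lemma juz_le: "PXZ x z * K0 x u \<le> juz u z"
  unfolding juz_def by (rule member_le_sum) (auto intro: mult_nonneg_nonneg PXZ_nn K_nn)

lemma sum_x_jux: "(\<Sum>u\<in>UNIV. jux u x) = px x"
  by (simp add: jux_def sum_distrib_left[symmetric] K_sum)
lemma sum_u_juz: "(\<Sum>u\<in>UNIV. juz u z) = pz z"
  using sum_pu_qzu[of z] pu_qzu by simp

lemma I1_triple: "mutual_info (\<lambda>x u. jux u x) =
   (\<Sum>x\<in>UNIV. \<Sum>u\<in>UNIV. \<Sum>z\<in>UNIV. if PXZ x z * K0 x u = 0 then 0 else PXZ x z * K0 x u * log 2 (K0 x u / pu u))"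
  unfolding mutual_info_def
proof (intro sum.cong refl)
  fix x u
  have pu_eq: "(\<Sum>x'\<in>UNIV. jux u x') = pu u" by (simp add: pu_def)
  show "(if jux u x = 0 then 0 else jux u x * log 2 (jux u x / ((\<Sum>b'\<in>UNIV. jux b' x) * (\<Sum>a'\<in>UNIV. jux u a')))) =
        (\<Sum>z\<in>UNIV. if PXZ x z * K0 x u = 0 then 0 else PXZ x z * K0 x u * log 2 (K0 x u / pu u))"
  proof (cases "jux u x = 0")
    case True
    then have "px x = 0 \<or> K0 x u = 0" by (simp add: jux_def)
    then have "PXZ x z * K0 x u = 0" for z using px0 by auto
    then show ?thesis using True by simp
  next
    case False
    then have pxp: "px x > 0" and Kp: "K0 x u > 0" using px_nn K_nn by (auto simp: jux_def less_le)
    have "(\<Sum>z\<in>UNIV. if PXZ x z * K0 x u = 0 then 0 else PXZ x z * K0 x u * log 2 (K0 x u / pu u)) =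
          (\<Sum>z\<in>UNIV. PXZ x z * K0 x u * log 2 (K0 x u / pu u))"
      by (intro sum.cong) auto
    also have "\<dots> = jux u x * log 2 (K0 x u / pu u)"
      by (simp add: sum_distrib_right[symmetric] jux_def px_def)
    moreover have "jux u x / (px x * pu u) = K0 x u / pu u" using pxp by (simp add: jux_def)
    ultimately show ?thesis using False by (simp add: sum_x_jux pu_eq)
  qed
qed

lemma I2_triple: "mutual_info juz =
   (\<Sum>u\<in>UNIV. \<Sum>z\<in>UNIV. \<Sum>x\<in>UNIV. if PXZ x z * K0 x u = 0 then 0 else PXZ x z * K0 x u * log 2 (juz u z / (pu u * pz z)))"
  unfolding mutual_info_def
proof (intro sum.cong refl)
  fix u z
  show "(if juz u z = 0 then 0 else juz u z * log 2 (juz u z / ((\<Sum>b'\<in>UNIV. juz u b') * (\<Sum>a'\<in>UNIV. juz a' z)))) =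
        (\<Sum>x\<in>UNIV. if PXZ x z * K0 x u = 0 then 0 else PXZ x z * K0 x u * log 2 (juz u z / (pu u * pz z)))"
  proof (cases "juz u z = 0")
    case True
    have "PXZ x z * K0 x u = 0" for x
      using juz_le[of x z u] mult_nonneg_nonneg[OF PXZ_nn[of x z] K_nn[of x u]] True by linarith
    then show ?thesis using True by simp
  next
    case False
    have "(\<Sum>x\<in>UNIV. if PXZ x z * K0 x u = 0 then 0 else PXZ x z * K0 x u * log 2 (juz u z / (pu u * pz z))) =
          (\<Sum>x\<in>UNIV. PXZ x z * K0 x u * log 2 (juz u z / (pu u * pz z)))"
      by (intro sum.cong) auto
    also have "\<dots> = juz u z * log 2 (juz u z / (pu u * pz z))"
      by (simp add: sum_distrib_right[symmetric] juz_def)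
    finally show ?thesis using False by (simp add: juz_sum sum_u_juz)
  qed
qed

lemma dpi: "mutual_info juz \<le> mutual_info (\<lambda>x u. jux u x)"
proof -
  define a where "a x u z = PXZ x z * K0 x u" for x u z
  define b where "b x u z = PXZ x z * juz u z / pz z" for x u z
  have pt: "(if a x u z = 0 then 0 else a x u z * log 2 (juz u z / (pu u * pz z))) -
            (if a x u z = 0 then 0 else a x u z * log 2 (K0 x u / pu u)) \<le> (b x u z - a x u z) / ln 2" for x u z
  proof (cases "a x u z = 0")
    case True
    then show ?thesis by (simp add: b_def divide_nonneg_nonneg mult_nonneg_nonneg PXZ_nn juz_nn pz_nn)
  next
    case False
    then have ap: "a x u z > 0" using PXZ_nn[of x z] K_nn[of x u] by (simp add: a_def less_le)
    then have PXZp: "PXZ x z > 0" and Kp: "K0 x u > 0" using PXZ_nn[of x z] K_nn[of x u]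
      by (auto simp: a_def less_le)
    have pzp: "pz z > 0" using pz0[of z x] PXZp pz_nn[of z] by (auto simp: less_le)
    have juzp: "juz u z > 0" using juz_le[of x z u] ap by (simp add: a_def)
    have pup: "pu u > 0"
    proof -
      have "px x \<noteq> 0" using px0[of x z] PXZp by auto
      then have "jux u x > 0" using Kp px_nn[of x] by (simp add: jux_def less_le)
      then show ?thesis using pu0[of u x] pu_nn[of u] by (auto simp: less_le)
    qed
    define y where "y = juz u z / (pz z * K0 x u)"
    have yp: "y > 0" using juzp pzp Kp by (simp add: y_def)
    have "log 2 (juz u z / (pu u * pz z)) - log 2 (K0 x u / pu u) = log 2 y"
      using juzp pup pzp Kp by (simp add: y_def log_divide log_mult)
    moreover have "log 2 y \<le> (y - 1) / ln 2"
      using ln_le_minus_one[OF yp] by (simp add: log_def divide_right_mono)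
    moreover have "a x u z * (y - 1) = b x u z - a x u z"
      using pzp Kp by (simp add: a_def b_def y_def field_simps)
    ultimately have "a x u z * (log 2 (juz u z / (pu u * pz z)) - log 2 (K0 x u / pu u)) \<le> (b x u z - a x u z) / ln 2"
      using ap by (metis mult_left_mono less_imp_le times_divide_eq_right)
    then show ?thesis using False by (simp add: right_diff_distrib)
  qed
  have sa: "(\<Sum>x\<in>UNIV. \<Sum>u\<in>UNIV. \<Sum>z\<in>UNIV. a x u z) = 1"
  proof -
    have "(\<Sum>x\<in>UNIV. \<Sum>u\<in>UNIV. \<Sum>z\<in>UNIV. a x u z) = (\<Sum>x\<in>UNIV. \<Sum>z\<in>UNIV. \<Sum>u\<in>UNIV. a x u z)"
      by (intro sum.cong refl) (rule sum.swap)
    also have "\<dots> = 1" by (simp add: a_def sum_distrib_left[symmetric] K_sum PXZ_sum)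
    finally show ?thesis .
  qed
  have sb: "(\<Sum>x\<in>UNIV. \<Sum>u\<in>UNIV. \<Sum>z\<in>UNIV. b x u z) = 1"
  proof -
    have "(\<Sum>x\<in>UNIV. \<Sum>u\<in>UNIV. \<Sum>z\<in>UNIV. b x u z) = (\<Sum>u\<in>UNIV. \<Sum>z\<in>UNIV. \<Sum>x\<in>UNIV. b x u z)"
      by (rule sum3_rot)
    also have "\<dots> = (\<Sum>u\<in>UNIV. \<Sum>z\<in>UNIV. juz u z)"
    proof (intro sum.cong refl)
      fix u z
      show "(\<Sum>x\<in>UNIV. b x u z) = juz u z"
      proof (cases "pz z = 0")
        case True
        then have "juz u z = 0" unfolding juz_def using pz0 by simp
        then show ?thesis by (simp add: b_def)
      next
        case False
        then show ?thesis by (simp add: b_def sum_divide_distrib[symmetric] sum_distrib_right[symmetric] pz_def[symmetric])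
      qed
    qed
    also have "\<dots> = 1" by (simp add: juz_sum pu_sum)
    finally show ?thesis .
  qed
  have "mutual_info juz - mutual_info (\<lambda>x u. jux u x) =
    (\<Sum>x\<in>UNIV. \<Sum>u\<in>UNIV. \<Sum>z\<in>UNIV. (if a x u z = 0 then 0 else a x u z * log 2 (juz u z / (pu u * pz z))) -
            (if a x u z = 0 then 0 else a x u z * log 2 (K0 x u / pu u)))"
  proof -
    have "mutual_info juz = (\<Sum>x\<in>UNIV. \<Sum>u\<in>UNIV. \<Sum>z\<in>UNIV. (if a x u z = 0 then 0 else a x u z * log 2 (juz u z / (pu u * pz z))))"
      unfolding I2_triple a_def by (rule sum3_rot[symmetric])
    then show ?thesis unfolding I1_triple a_def by (simp add: sum_subtractf)
  qed
  also have "\<dots> \<le> (\<Sum>x\<in>UNIV. \<Sum>u\<in>UNIV. \<Sum>z\<in>UNIV. (b x u z - a x u z) / ln 2)"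
    by (intro sum_mono pt)
  also have "\<dots> = 0"
    by (simp add: sum_divide_distrib[symmetric] sum_subtractf sa sb)
  finally show ?thesis by simp
qed

end

lemma pr1_pr2: "pr1 n f u * pr2 n g u x = pr2 n (\<lambda>a b. f a * g a b) u x"
  by (simp add: pr1_def pr2_def prod.distrib)

context wz begin

lemma joint1: "joint (\<lambda>u x. jux u x)"
  by unfold_locales (auto simp: jux_nn pu_def[symmetric] pu_sum)
lemma joint2: "joint juz"
  by unfold_locales (auto simp: juz_nn juz_sum pu_sum)

lemma J1_pa: "joint.pa (\<lambda>u x. jux u x) = pu"
  by (rule ext) (simp add: joint.pa_def[OF joint1] pu_def)
lemma J1_pb: "joint.pb (\<lambda>u x. jux u x) = px"
  by (rule ext) (simp add: joint.pb_def[OF joint1] sum_x_jux)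
lemma J2_pa: "joint.pa juz = pu"
  by (rule ext) (simp add: joint.pa_def[OF joint2] juz_sum)
lemma J2_pb: "joint.pb juz = pz"
  by (rule ext) (simp add: joint.pb_def[OF joint2] sum_u_juz)

lemma J1_MI: "joint.MI (\<lambda>u x. jux u x) = mutual_info (\<lambda>x u. jux u x)"
  unfolding joint.MI_def[OF joint1] J1_pa J1_pb mutual_info_def
  by (subst sum.swap) (simp add: pu_def[symmetric] sum_x_jux mult.commute cong: if_cong)
lemma J2_MI: "joint.MI juz = mutual_info juz"
  unfolding joint.MI_def[OF joint2] J2_pa J2_pb mutual_info_def
  by (simp add: juz_sum sum_u_juz cong: if_cong)

lemma pu_qxu_fun: "(\<lambda>a b. pu a * qxu a b) = (\<lambda>u x. jux u x)" by (simp add: pu_qxu)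
lemma pu_qzu_fun: "(\<lambda>a b. pu a * qzu a b) = juz" by (rule ext, rule ext) (simp add: pu_qzu)

lemma tail1_le:
  assumes t: "t > 0"
  shows "tail1 n (exp (real n * \<gamma>)) \<le> (Gf (\<lambda>u x. jux u x) (joint.dd (\<lambda>u x. jux u x) \<gamma>) t) ^ n"
proof -
  have "tail1 n (exp (real n * \<gamma>)) \<le> (\<Sum>us\<in>seqs n. \<Sum>xs\<in>seqs n. pr2 n (\<lambda>u x. jux u x) us xs *
           (if pr2 n (\<lambda>u x. jux u x) us xs > exp (real n * \<gamma>) * pr1 n pu us * pr1 n px xs then 1 else 0))"
    unfolding tail1_def
  proof (intro sum_mono)
    fix us :: "'u list" and xs :: "'x list"
    have e: "pr1 n pu us * pr2 n qxu us xs = pr2 n (\<lambda>u x. jux u x) us xs"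
      by (simp add: pr1_pr2 pu_qxu_fun)
    show "pr1 n pu us * pr2 n qxu us xs * (if pr2 n qxu us xs > exp (real n * \<gamma>) * pr1 n px xs then 1 else 0)
       \<le> pr2 n (\<lambda>u x. jux u x) us xs *
           (if pr2 n (\<lambda>u x. jux u x) us xs > exp (real n * \<gamma>) * pr1 n pu us * pr1 n px xs then 1 else 0)"
    proof (cases "pr1 n pu us > 0")
      case True
      have "pr2 n qxu us xs > exp (real n * \<gamma>) * pr1 n px xs \<Longrightarrow>
            pr2 n (\<lambda>u x. jux u x) us xs > exp (real n * \<gamma>) * pr1 n pu us * pr1 n px xs"
        unfolding e[symmetric] using True by (simp add: mult.commute mult.left_commute)
      then show ?thesis using e qxb_nn[of n us xs] pub_nn[of n us] by (auto simp: pr2_nn jux_nn)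
    next
      case False
      then have "pr1 n pu us = 0" using pub_nn[of n us] by simp
      then show ?thesis using e by (simp add: pr2_nn jux_nn)
    qed
  qed
  also have "\<dots> \<le> (Gf (\<lambda>u x. jux u x) (joint.dd (\<lambda>u x. jux u x) \<gamma>) t) ^ n" using joint.upper[OF joint1 t, of n \<gamma>] unfolding J1_pa J1_pb .
  finally show ?thesis .
qed

lemma tail2_le:
  assumes t: "t < 0"
  shows "tail2 n (exp (real n * \<gamma>)) \<le> (Gf juz (joint.dd juz \<gamma>) t) ^ n"
proof -
  have "tail2 n (exp (real n * \<gamma>)) \<le> (\<Sum>us\<in>seqs n. \<Sum>zs\<in>seqs n. pr2 n juz us zs *
           (if pr2 n juz us zs < exp (real n * \<gamma>) * pr1 n pu us * pr1 n pz zs then 1 else 0))"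
    unfolding tail2_def
  proof (intro sum_mono)
    fix us :: "'u list" and zs :: "'z list"
    have e: "pr1 n pu us * pr2 n qzu us zs = pr2 n juz us zs"
      by (simp add: pr1_pr2 pu_qzu_fun)
    show "pr1 n pu us * pr2 n qzu us zs * (if pr2 n qzu us zs < exp (real n * \<gamma>) * pr1 n pz zs then 1 else 0)
       \<le> pr2 n juz us zs *
           (if pr2 n juz us zs < exp (real n * \<gamma>) * pr1 n pu us * pr1 n pz zs then 1 else 0)"
    proof (cases "pr1 n pu us > 0")
      case True
      have "pr2 n qzu us zs < exp (real n * \<gamma>) * pr1 n pz zs \<Longrightarrow>
            pr2 n juz us zs < exp (real n * \<gamma>) * pr1 n pu us * pr1 n pz zs"
        unfolding e[symmetric] using True by (simp add: mult.commute mult.left_commute)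
      then show ?thesis using e qzb_nn[of n us zs] pub_nn[of n us] by (auto simp: pr2_nn juz_nn)
    next
      case False
      then have "pr1 n pu us = 0" using pub_nn[of n us] by simp
      then show ?thesis using e by (simp add: pr2_nn juz_nn)
    qed
  qed
  also have "\<dots> \<le> (Gf juz (joint.dd juz \<gamma>) t) ^ n" using joint.lower[OF joint2 t, of n \<gamma>] unfolding J2_pa J2_pb .
  finally show ?thesis .
qed

end

lemma exp2: "exp (x * (ln 2 * c)) = (2::real) powr (x * c)"
  by (simp add: powr_def mult_ac)

lemma pow_powr2: "(2 powr a) ^ n = 2 powr (real n * a)"
  by (simp add: powr_realpow[symmetric] powr_powr mult.commute)

context wz begin

lemma per_n:
  fixes \<epsilon> R t1 t2 :: real and n :: nat
  defines "I1 \<equiv> mutual_info (\<lambda>x u. jux u x)" and "I2 \<equiv> mutual_info juz"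
  defines "\<delta> \<equiv> \<epsilon> / 8"
  defines "a \<equiv> Gf (\<lambda>u x. jux u x) (joint.dd (\<lambda>u x. jux u x) (ln 2 * (I1 + \<delta>))) t1"
    and "b \<equiv> Gf juz (joint.dd juz (ln 2 * (I2 - \<delta>))) t2"
  assumes n1: "n \<ge> 1" and eps: "\<epsilon> > 0" and Rge: "R \<ge> I1 - I2"
    and big: "2 powr (real n * (R + \<epsilon>)) \<ge> 2"
    and t1: "t1 > 0" and t2: "t2 < 0"
  shows "\<exists>\<Theta> E D. is_protocol n \<Theta> E D \<and> log 2 (real \<Theta>) / real n \<le> R + \<epsilon> \<and>
     protocol_error PXZ W n \<Theta> E D \<le> 2 * a ^ n + sqrt (2 * (2 powr (-(5*\<delta>))) ^ n) + 2 * b ^ n + 2 * (2 powr (-\<delta>)) ^ n"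
proof -
  define X where "X = 2 powr (real n * (R + \<epsilon>))"
  define Y where "Y = 2 powr (real n * (I2 - 2*\<delta>))"
  define Th where "Th = nat \<lfloor>X\<rfloor>"
  define L where "L = nat \<lfloor>Y\<rfloor> + 1"
  define K where "K = Th * L"
  define T0 where "T0 = exp (real n * (ln 2 * (I1 + \<delta>)))"
  define T1 where "T1 = exp (real n * (ln 2 * (I2 - \<delta>)))"
  have Ypos: "Y > 0" by (simp add: Y_def)
  have Th_le: "real Th \<le> X" using big unfolding Th_def X_def by simp
  have Th_ge: "real Th \<ge> X - 1" using big unfolding Th_def X_def by linarith
  have Th1: "Th \<ge> 1" using big unfolding Th_def X_def by linarith
  have L1: "L \<ge> 1" by (simp add: L_def)
  have L_ge: "real L \<ge> Y" using Ypos unfolding L_def by linarith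
  have L_le: "real L - 1 \<le> Y" using Ypos unfolding L_def by linarith
  have K1: "K \<ge> 1" using Th1 L1 by (simp add: K_def)
  have T0pos: "T0 > 0" by (simp add: T0_def)
  have T1pos: "T1 > 0" by (simp add: T1_def)
  interpret C: cbk "seqs n :: 'u list set" "pr1 n pu" K by (rule cbk_inst)
  define B where "B c = (\<Sum>x\<in>seqs n. \<bar>pr1 n px x - Gs n c x / real K\<bar>) +
     2 / real K * (\<Sum>k<K. \<Sum>z\<in>seqs n. pr2 n qzu (c!k) z * (1 - lam n L c (k div L + 1) z k))" for c
  obtain c where c: "c \<in> lset (seqs n) K" and cB: "B c \<le> C.Exc B"
    using C.Exc_exists[of B] by auto
  have lenc: "length c = Th * L" using c by (simp add: lset_def K_def)
  have EB: "C.Exc B \<le> 2 * tail1 n T0 + sqrt (T0 / real K) + 2 * (tail2 n T1 + (real L - 1) / T1)"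
  proof -
    have "C.Exc B = C.Exc (\<lambda>c. \<Sum>x\<in>seqs n. \<bar>pr1 n px x - Gs n c x / real K\<bar>) +
       2 / real K * C.Exc (\<lambda>c. \<Sum>k<K. \<Sum>z\<in>seqs n. pr2 n qzu (c!k) z * (1 - lam n L c (k div L + 1) z k))"
      unfolding B_def by (simp only: C.Exc_add C.Exc_scale)
    also have "\<dots> \<le> (2 * tail1 n T0 + sqrt (T0 / real K)) + 2 / real K * (real K * (tail2 n T1 + (real L - 1) / T1))"
      using soft_cov[OF T0pos K1, of n] dec_exp[OF T1pos Th1 L1, of n] K1
      unfolding K_def by (intro add_mono mult_left_mono) auto
    finally show ?thesis using K1 by simp
  qed
  have err: "protocol_error PXZ W n Th (enc n L c) (dec n L c) \<le> B c"
    using error_bound[OF lenc Th1 L1, of n] unfolding B_def K_def .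
  have tl1: "tail1 n T0 \<le> a ^ n" unfolding T0_def a_def I1_def by (rule tail1_le[OF t1])
  have tl2: "tail2 n T1 \<le> b ^ n" unfolding T1_def b_def I2_def by (rule tail2_le[OF t2])
  have dpi': "I2 \<le> I1" unfolding I1_def I2_def by (rule dpi)
  have r1: "(real L - 1) / T1 \<le> (2 powr (-\<delta>)) ^ n"
  proof -
    have "(real L - 1) / T1 \<le> Y / T1" using L_le T1pos by (simp add: divide_right_mono)
    also have "\<dots> = 2 powr (real n * (I2 - 2*\<delta>) - real n * (I2 - \<delta>))"
      unfolding Y_def T1_def exp2 by (simp add: powr_diff)
    also have "\<dots> = (2 powr (-\<delta>)) ^ n" by (simp add: pow_powr2 algebra_simps)
    finally show ?thesis .
  qed
  have r2: "T0 / real K \<le> 2 * (2 powr (-(5*\<delta>))) ^ n"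
  proof -
    have Xh: "real Th \<ge> X / 2" using Th_ge big X_def by simp
    have XY: "(X / 2) * Y \<le> real Th * real L"
      by (rule mult_mono) (use Xh L_ge Ypos in auto)
    have "0 \<le> real n * (R + I2 - I1)" using Rge by simp
    then have le1: "real n * (I1 + \<epsilon> - 2*\<delta>) - 1 \<le> real n * (R + \<epsilon>) + real n * (I2 - 2*\<delta>) - 1"
      by (simp add: algebra_simps)
    have "2 powr (real n * (I1 + \<epsilon> - 2*\<delta>) - 1) \<le> 2 powr (real n * (R + \<epsilon>) + real n * (I2 - 2*\<delta>) - 1)"
      using le1 by simp
    also have "\<dots> = (X / 2) * Y"
      unfolding X_def Y_def by (simp add: powr_add powr_diff)
    also have "\<dots> \<le> real K" using XY unfolding K_def by simp
    finally have Kge: "real K \<ge> 2 powr (real n * (I1 + \<epsilon> - 2*\<delta>) - 1)" .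
    have "T0 / real K \<le> T0 / 2 powr (real n * (I1 + \<epsilon> - 2*\<delta>) - 1)"
      using Kge T0pos K1 by (intro divide_left_mono) auto
    also have "\<dots> = 2 powr (real n * (I1 + \<delta>) - (real n * (I1 + \<epsilon> - 2*\<delta>) - 1))"
      unfolding T0_def exp2 by (simp add: powr_diff)
    also have "\<dots> = 2 powr (1 + real n * (-(5*\<delta>)))"
      by (simp add: \<delta>_def algebra_simps)
    also have "\<dots> = 2 * (2 powr (-(5*\<delta>))) ^ n"
      by (simp only: powr_add pow_powr2) simp
    finally show ?thesis .
  qed
  have final: "protocol_error PXZ W n Th (enc n L c) (dec n L c) \<le>
     2 * a ^ n + sqrt (2 * (2 powr (-(5*\<delta>))) ^ n) + 2 * b ^ n + 2 * (2 powr (-\<delta>)) ^ n"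
  proof -
    have "protocol_error PXZ W n Th (enc n L c) (dec n L c) \<le> 2 * tail1 n T0 + sqrt (T0 / real K) + 2 * (tail2 n T1 + (real L - 1) / T1)"
      using err cB EB by linarith
    also have "\<dots> \<le> 2 * a ^ n + sqrt (2 * (2 powr (-(5*\<delta>))) ^ n) + 2 * (b ^ n + (2 powr (-\<delta>)) ^ n)"
      using tl1 tl2 r1 r2 by (intro add_mono mult_left_mono real_sqrt_le_mono) auto
    finally show ?thesis by simp
  qed
  have rate: "log 2 (real Th) / real n \<le> R + \<epsilon>"
  proof -
    have "log 2 (real Th) \<le> log 2 X" using Th1 Th_le by simp
    also have "log 2 X = real n * (R + \<epsilon>)" by (simp add: X_def)
    finally show ?thesis using n1 by (simp add: divide_le_eq mult.commute)
  qed
  show ?thesis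
    using protocol[OF lenc Th1 L1, of n] rate final by blast
qed

end

context wz begin

lemma wz_achievable:
  assumes Rge: "R \<ge> mutual_info (\<lambda>x u. jux u x) - mutual_info juz"
  shows "achievable PXZ W R"
  unfolding achievable_def
proof (intro allI impI)
  fix \<epsilon> :: real assume eps: "\<epsilon> > 0"
  define I1 where "I1 = mutual_info (\<lambda>x u. jux u x)"
  define I2 where "I2 = mutual_info juz"
  define \<delta> where "\<delta> = \<epsilon> / 8"
  have dpos: "\<delta> > 0" using eps by (simp add: \<delta>_def)
  have I21: "I2 \<le> I1" unfolding I1_def I2_def by (rule dpi)
  have Rp: "R + \<epsilon> > 0" using Rge I21 eps unfolding I1_def I2_def by linarith
  obtain t1 where t1: "t1 > 0" and a1: "Gf (\<lambda>u x. jux u x) (joint.dd (\<lambda>u x. jux u x) (ln 2 * (I1 + \<delta>))) t1 < 1"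
    using joint.exp_upper[OF joint1, of "ln 2 * (I1 + \<delta>)"] dpos unfolding J1_MI I1_def by auto
  obtain t2 where t2: "t2 < 0" and b1: "Gf juz (joint.dd juz (ln 2 * (I2 - \<delta>))) t2 < 1"
    using joint.exp_lower[OF joint2, of "ln 2 * (I2 - \<delta>)"] dpos unfolding J2_MI I2_def by auto
  define a where "a = Gf (\<lambda>u x. jux u x) (joint.dd (\<lambda>u x. jux u x) (ln 2 * (I1 + \<delta>))) t1"
  define b where "b = Gf juz (joint.dd juz (ln 2 * (I2 - \<delta>))) t2"
  have a0: "a \<ge> 0" unfolding a_def by (rule Gf_nonneg) (simp add: jux_nn)
  have b0: "b \<ge> 0" unfolding b_def by (rule Gf_nonneg) (simp add: juz_nn)
  define r5 where "r5 = (2::real) powr (-(5*\<delta>))"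
  define r1 where "r1 = (2::real) powr (-\<delta>)"
  have "(2::real) powr (-(5*\<delta>)) < 2 powr 0" using dpos by (subst powr_less_cancel_iff) auto
  then have r5: "norm r5 < 1" by (simp add: r5_def)
  have "(2::real) powr (-\<delta>) < 2 powr 0" using dpos by (subst powr_less_cancel_iff) auto
  then have r1: "norm r1 < 1" by (simp add: r1_def)
  have lim: "(\<lambda>n. 2 * a ^ n + sqrt (2 * r5 ^ n) + 2 * b ^ n + 2 * r1 ^ n) \<longlonglongrightarrow> 2 * 0 + sqrt (2 * 0) + 2 * 0 + 2 * 0"
    using a1 b1 a0 b0 r5 r1 unfolding a_def[symmetric] b_def[symmetric]
    by (intro tendsto_add tendsto_mult tendsto_const tendsto_real_sqrt LIMSEQ_power_zero) auto
  then have "eventually (\<lambda>n. 2 * a ^ n + sqrt (2 * r5 ^ n) + 2 * b ^ n + 2 * r1 ^ n < \<epsilon>) sequentially"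
    using eps by (intro order_tendstoD(2)) auto
  moreover have "eventually (\<lambda>n. real n \<ge> 1 / (R + \<epsilon>) \<and> n \<ge> 1) sequentially"
  proof -
    have "eventually (\<lambda>n. n \<ge> nat \<lceil>1 / (R + \<epsilon>)\<rceil> + 1) sequentially" by (rule eventually_ge_at_top)
    then show ?thesis by eventually_elim linarith
  qed
  ultimately obtain N where N: "\<And>n. n \<ge> N \<Longrightarrow> 2 * a ^ n + sqrt (2 * r5 ^ n) + 2 * b ^ n + 2 * r1 ^ n < \<epsilon> \<and>
       real n \<ge> 1 / (R + \<epsilon>) \<and> n \<ge> 1"
    unfolding eventually_sequentially by (metis (no_types, lifting) eventually_conj eventually_sequentially)
  show "\<exists>N. \<forall>n\<ge>N. \<exists>\<Theta> E D. is_protocol n \<Theta> E D \<and> log 2 (real \<Theta>) / real n \<le> R + \<epsilon> \<and> protocol_error PXZ W n \<Theta> E D \<le> \<epsilon>"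
  proof (rule exI[of _ N], intro allI impI)
    fix n assume "n \<ge> N"
    note Nn = N[OF this]
    have "real n * (R + \<epsilon>) \<ge> 1" using Nn Rp by (simp add: field_simps)
    then have big: "2 powr (real n * (R + \<epsilon>)) \<ge> 2"
      using powr_mono[of 1 "real n * (R + \<epsilon>)" 2] by simp
    from per_n[of n \<epsilon> R t1 t2] obtain Th E D where
      "is_protocol n Th E D" "log 2 (real Th) / real n \<le> R + \<epsilon>"
      "protocol_error PXZ W n Th E D \<le> 2 * a ^ n + sqrt (2 * r5 ^ n) + 2 * b ^ n + 2 * r1 ^ n"
      using Nn eps Rge big t1 t2 unfolding a_def b_def r5_def r1_def I1_def I2_def \<delta>_def by blast
    then show "\<exists>\<Theta> E D. is_protocol n \<Theta> E D \<and> log 2 (real \<Theta>) / real n \<le> R + \<epsilon> \<and> protocol_error PXZ W n \<Theta> E D \<le> \<epsilon>"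
      using Nn by (intro exI[of _ Th] exI[of _ E] exI[of _ D]) auto
  qed
qed

end

theorem theorem2:
  fixes PXZ :: "'x::finite \<Rightarrow> 'z::finite \<Rightarrow> real"
    and W :: "'y::finite \<Rightarrow> 'z \<Rightarrow> 'x \<Rightarrow> real"
    and PU_X :: "'x \<Rightarrow> 'u::finite \<Rightarrow> real"
    and PY_UZ :: "'u \<Rightarrow> 'z \<Rightarrow> 'y \<Rightarrow> real"
    and R :: real
  defines "P \<equiv> (\<lambda>u x y z. PXZ x z * PU_X x u * PY_UZ u z y)"
  assumes PXZ_pmf: "is_pmf (\<lambda>(x, z). PXZ x z)"
    and W_cond: "\<forall>y z. is_pmf (W y z)"
    and PU_X_cond: "\<forall>x. is_pmf (PU_X x)"
    and PY_UZ_cond: "\<forall>u z. is_pmf (PY_UZ u z)"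
    and posterior: "\<forall>x y z. (\<Sum>u\<in>UNIV. \<Sum>x'\<in>UNIV. P u x' y z) > 0 \<longrightarrow>
                  (\<Sum>u\<in>UNIV. P u x y z) / (\<Sum>u\<in>UNIV. \<Sum>x'\<in>UNIV. P u x' y z) = W y z x"
    and markov_ZXU: "markov_chain (\<lambda>z x u. \<Sum>y\<in>UNIV. P u x y z)"
    and markov_XUZ_Y: "markov_chain (\<lambda>x (u, z) y. P u x y z)"
    and markov_XYZ_U: "markov_chain (\<lambda>x (y, z) u. P u x y z)"
    and rate: "R \<ge> mutual_info (\<lambda>x u. \<Sum>y\<in>UNIV. \<Sum>z\<in>UNIV. P u x y z)
                  - mutual_info (\<lambda>u z. \<Sum>x\<in>UNIV. \<Sum>y\<in>UNIV. P u x y z)"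
  shows "achievable PXZ W R"
proof -
  have Pnn0: "\<And>x z. PXZ x z \<ge> 0" using PXZ_pmf unfolding is_pmf_def by auto
  have PXZs: "(\<Sum>x\<in>UNIV. \<Sum>z\<in>UNIV. PXZ x z) = 1"
  proof -
    have "(\<Sum>p\<in>(UNIV::('x \<times> 'z) set). (\<lambda>(x, z). PXZ x z) p) = 1" using PXZ_pmf unfolding is_pmf_def by auto
    then show ?thesis by (simp add: UNIV_Times_UNIV[symmetric] sum.cartesian_product del: UNIV_Times_UNIV)
  qed
  have Wnn: "\<And>y z x. W y z x \<ge> 0" and Ws: "\<And>y z. (\<Sum>x\<in>UNIV. W y z x) = 1"
    using W_cond unfolding is_pmf_def by auto
  have Knn: "\<And>x u. PU_X x u \<ge> 0" and Ks: "\<And>x. (\<Sum>u\<in>UNIV. PU_X x u) = 1"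
    using PU_X_cond unfolding is_pmf_def by auto
  have Ynn: "\<And>u z y. PY_UZ u z y \<ge> 0" and Ys: "\<And>u z. (\<Sum>y\<in>UNIV. PY_UZ u z y) = 1"
    using PY_UZ_cond unfolding is_pmf_def by auto
  have Pnn: "P u x y z \<ge> 0" for u x y z unfolding P_def by (intro mult_nonneg_nonneg Pnn0 Knn Ynn)
  have fac: "PXZ x z * PU_X x u * PY_UZ u z y = (\<Sum>x'\<in>UNIV. PXZ x' z * PU_X x' u * PY_UZ u z y) * W y z x" for u x y z
  proof -
    define S where "S = (\<Sum>u\<in>UNIV. \<Sum>x'\<in>UNIV. P u x' y z)"
    have mk: "P u x y z * (\<Sum>x'\<in>UNIV. \<Sum>u'\<in>UNIV. P u' x' y z) = (\<Sum>u'\<in>UNIV. P u' x y z) * (\<Sum>x'\<in>UNIV. P u x' y z)"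
      using markov_XYZ_U[unfolded markov_chain_def, rule_format, of x "(y, z)" u] by simp
    have Sswap: "(\<Sum>x'\<in>UNIV. \<Sum>u'\<in>UNIV. P u' x' y z) = S" unfolding S_def by (rule sum.swap)
    show ?thesis
    proof (cases "S > 0")
      case True
      have "(\<Sum>u\<in>UNIV. P u x y z) / S = W y z x" using posterior True unfolding S_def by auto
      then have "P u x y z = (\<Sum>x'\<in>UNIV. P u x' y z) * W y z x"
        using mk Sswap True by (simp add: field_simps)
      then show ?thesis unfolding P_def .
    next
      case False
      have "S \<ge> 0" unfolding S_def by (intro sum_nonneg Pnn)
      then have S0: "S = 0" using False by linarith
      have "\<forall>u\<in>UNIV. (\<Sum>x'\<in>UNIV. P u x' y z) = 0"
        using S0 unfolding S_def by (subst (asm) sum_nonneg_eq_0_iff) (auto intro: sum_nonneg Pnn)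
      then have z1: "(\<Sum>x'\<in>UNIV. P u x' y z) = 0" by blast
      then have "\<forall>x'\<in>UNIV. P u x' y z = 0"
        by (subst (asm) sum_nonneg_eq_0_iff) (auto intro: Pnn)
      then have "P u x y z = 0" by blast
      then show ?thesis using z1 unfolding P_def by simp
    qed
  qed
  interpret wz PXZ W PU_X PY_UZ
    by unfold_locales (rule Pnn0, rule PXZs, rule Wnn, rule Ws, rule Knn, rule Ks, rule Ynn, rule Ys, rule fac)
  have e1: "(\<lambda>x u. \<Sum>y\<in>UNIV. \<Sum>z\<in>UNIV. P u x y z) = (\<lambda>x u. jux u x)"
  proof (intro ext)
    fix x u
    have "(\<Sum>y\<in>UNIV. \<Sum>z\<in>UNIV. P u x y z) = (\<Sum>z\<in>UNIV. \<Sum>y\<in>UNIV. P u x y z)" by (rule sum.swap)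
    also have "\<dots> = (\<Sum>z\<in>UNIV. PXZ x z * PU_X x u)" unfolding P_def by (simp add: sum_distrib_left[symmetric] Ys)
    also have "\<dots> = jux u x" by (simp add: jux_def px_def sum_distrib_right)
    finally show "(\<Sum>y\<in>UNIV. \<Sum>z\<in>UNIV. P u x y z) = jux u x" .
  qed
  have e2: "(\<lambda>u z. \<Sum>x\<in>UNIV. \<Sum>y\<in>UNIV. P u x y z) = juz"
    by (intro ext) (simp add: P_def juz_def sum_distrib_left[symmetric] Ys)
  have "R \<ge> mutual_info (\<lambda>x u. jux u x) - mutual_info juz" using rate by (simp only: e1 e2)
  then show ?thesis by (rule wz_achievable)
qed


end
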